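(* For every even integer $n\ge14$ there exist two connected, irregular, nonisomorphic graphs $G,H$ on $n$ vertices which are cospectral with respect to each of the adjacency matrix, the Laplacian matrix, the signless Laplacian matrix and the normalized Laplacian matrix, which satisfy $\alpha(G)=\alpha(H)$, $\omega(G)=\omega(H)$ and $\chi(G)=\chi(H)$, and for which $\vartheta(G)\ne\vartheta(H)$.
   Context: Graphs are finite, simple, undirected. For a graph with adjacency matrix $A$ and diagonal degree matrix $D$, the Laplacian is $L=D-A$, the signless Laplacian is $Q=D+A$, and the normalized Laplacian is $I-D^{-1/2}AD^{-1/2}$ (with $d_i^{-1/2}:=0$ for isolated vertices). Two graphs are cospectral with respect to a matrix type if those matrices have identical multisets of eigenvalues. $\alpha,\omega,\chi$ are the independence, clique and chromatic numbers; $\vartheta(G)$ is the Lovász theta function: the maximum of $\mathrm{Tr}(BJ)$ over positive semidefinite $B$ indexed by $V(G)$ with $\mathrm{Tr}B=1$ and $B_{i,j}=0$ for $\{i,j\}\in E(G)$, $J$ the all-ones matrix. Irregular means not all vertex degrees are equal. *)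

theory Defs
  imports "Jordan_Normal_Form.Char_Poly" "HOL-Computational_Algebra.Polynomial"
begin

definition simple_graph :: "nat \<Rightarrow> (nat \<Rightarrow> nat \<Rightarrow> bool) \<Rightarrow> bool" where
  "simple_graph n E \<longleftrightarrow>
     (\<forall>i j. E i j \<longrightarrow> i < n \<and> j < n \<and> i \<noteq> j) \<and> (\<forall>i j. E i j \<longrightarrow> E j i)"

definition degree :: "nat \<Rightarrow> (nat \<Rightarrow> nat \<Rightarrow> bool) \<Rightarrow> nat \<Rightarrow> nat" where
  "degree n E i = card {j. j < n \<and> E i j}"

definition connected_graph :: "nat \<Rightarrow> (nat \<Rightarrow> nat \<Rightarrow> bool) \<Rightarrow> bool" where
  "connected_graph n E \<longleftrightarrow> n > 0 \<and> (\<forall>i<n. \<forall>j<n. E\<^sup>*\<^sup>* i j)"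

definition irregular :: "nat \<Rightarrow> (nat \<Rightarrow> nat \<Rightarrow> bool) \<Rightarrow> bool" where
  "irregular n E \<longleftrightarrow> (\<exists>i<n. \<exists>j<n. degree n E i \<noteq> degree n E j)"

definition isomorphic :: "nat \<Rightarrow> (nat \<Rightarrow> nat \<Rightarrow> bool) \<Rightarrow> (nat \<Rightarrow> nat \<Rightarrow> bool) \<Rightarrow> bool" where
  "isomorphic n E F \<longleftrightarrow>
     (\<exists>f. bij_betw f {0..<n} {0..<n} \<and> (\<forall>i<n. \<forall>j<n. E i j \<longleftrightarrow> F (f i) (f j)))"

definition graph_adj_mat :: "nat \<Rightarrow> (nat \<Rightarrow> nat \<Rightarrow> bool) \<Rightarrow> real mat" where
  "graph_adj_mat n E = mat n n (\<lambda>(i,j). if E i j then 1 else 0)"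

definition deg_mat :: "nat \<Rightarrow> (nat \<Rightarrow> nat \<Rightarrow> bool) \<Rightarrow> real mat" where
  "deg_mat n E = mat n n (\<lambda>(i,j). if i = j then real (degree n E i) else 0)"

definition laplacian :: "nat \<Rightarrow> (nat \<Rightarrow> nat \<Rightarrow> bool) \<Rightarrow> real mat" where
  "laplacian n E = deg_mat n E - graph_adj_mat n E"

definition signless_laplacian :: "nat \<Rightarrow> (nat \<Rightarrow> nat \<Rightarrow> bool) \<Rightarrow> real mat" where
  "signless_laplacian n E = deg_mat n E + graph_adj_mat n E"

(* D^{-1/2}, with d_i^{-1/2} := 0 for isolated vertices *)
definition deg_inv_sqrt_mat :: "nat \<Rightarrow> (nat \<Rightarrow> nat \<Rightarrow> bool) \<Rightarrow> real mat" where
  "deg_inv_sqrt_mat n E = mat n n (\<lambda>(i,j). if i = j \<and> degree n E i \<noteq> 0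
       then 1 / sqrt (real (degree n E i)) else 0)"

definition normalized_laplacian :: "nat \<Rightarrow> (nat \<Rightarrow> nat \<Rightarrow> bool) \<Rightarrow> real mat" where
  "normalized_laplacian n E =
     1\<^sub>m n - deg_inv_sqrt_mat n E * graph_adj_mat n E * deg_inv_sqrt_mat n E"

definition spectrum_mset :: "real mat \<Rightarrow> complex multiset" where
  "spectrum_mset A = proots (char_poly (map_mat complex_of_real A))"

definition cospectral :: "real mat \<Rightarrow> real mat \<Rightarrow> bool" where
  "cospectral A B \<longleftrightarrow> spectrum_mset A = spectrum_mset B"

definition independence_number :: "nat \<Rightarrow> (nat \<Rightarrow> nat \<Rightarrow> bool) \<Rightarrow> nat" where
  "independence_number n E =
     Max {card S | S. S \<subseteq> {0..<n} \<and> (\<forall>i\<in>S. \<forall>j\<in>S. \<not> E i j)}"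

definition clique_number :: "nat \<Rightarrow> (nat \<Rightarrow> nat \<Rightarrow> bool) \<Rightarrow> nat" where
  "clique_number n E =
     Max {card S | S. S \<subseteq> {0..<n} \<and> (\<forall>i\<in>S. \<forall>j\<in>S. i \<noteq> j \<longrightarrow> E i j)}"

definition chromatic_number :: "nat \<Rightarrow> (nat \<Rightarrow> nat \<Rightarrow> bool) \<Rightarrow> nat" where
  "chromatic_number n E =
     (LEAST k. \<exists>c. (\<forall>i<n. c i < k) \<and> (\<forall>i<n. \<forall>j<n. E i j \<longrightarrow> c i \<noteq> c j))"

definition mat_trace :: "real mat \<Rightarrow> real" where
  "mat_trace B = (\<Sum>i<dim_row B. B $$ (i,i))"

definition psd :: "nat \<Rightarrow> real mat \<Rightarrow> bool" where
  "psd n B \<longleftrightarrow> B \<in> carrier_mat n n \<and> transpose_mat B = B \<and>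
     (\<forall>x \<in> carrier_vec n. 0 \<le> x \<bullet> (B *\<^sub>v x))"

(* Lovasz theta: maximum of Tr(BJ) over feasible B (the maximum is attained) *)
definition lovasz_theta :: "nat \<Rightarrow> (nat \<Rightarrow> nat \<Rightarrow> bool) \<Rightarrow> real" where
  "lovasz_theta n E = Sup {mat_trace (B * mat n n (\<lambda>_. 1)) | B.
      psd n B \<and> mat_trace B = 1 \<and> (\<forall>i<n. \<forall>j<n. E i j \<longrightarrow> B $$ (i,j) = 0)}"

end

theory Submission
  imports Defs
begin


definition tab :: "int list list \<Rightarrow> nat \<Rightarrow> nat \<Rightarrow> int" where
  "tab T i j = (if i < length T then (if j < length (T!i) then T!i!j else 0) else 0)"

definition nth0 :: "int list \<Rightarrow> nat \<Rightarrow> int" where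
  "nth0 v i = (if i < length v then v!i else 0)"

definition gram :: "int list list \<Rightarrow> nat \<Rightarrow> nat \<Rightarrow> int" where
  "gram V i j = sum_list (map (\<lambda>v. nth0 v i * nth0 v j) V)"

definition resid :: "int \<Rightarrow> int list list \<Rightarrow> int list list \<Rightarrow> nat \<Rightarrow> nat \<Rightarrow> int" where
  "resid a M V i j = a * tab M i j - gram V i j"

definition dd_ok :: "nat \<Rightarrow> int \<Rightarrow> int list list \<Rightarrow> int list list \<Rightarrow> bool" where
  "dd_ok N a M V = (list_all (\<lambda>i. sum_list (map (\<lambda>j. if j = i then 0 else \<bar>resid a M V i j\<bar>) [0..<N]) \<le> resid a M V i i) [0..<N]
     \<and> list_all (\<lambda>i. list_all (\<lambda>j. tab M i j = tab M j i) [0..<N]) [0..<N])"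

definition core_adj :: "(nat \<times> nat) list \<Rightarrow> nat \<Rightarrow> nat \<Rightarrow> bool" where
  "core_adj es i j = ((i,j) \<in> set es \<or> (j,i) \<in> set es)"



lemma if01_mult: "(if b then 1 else 0) * (x::real) = (if b then x else 0)"
  "(x::real) * (if b then 1 else 0) = (if b then x else 0)"
  "(if b then c else 0) * (x::real) = (if b then c * x else 0)"
  "(x::real) * (if b then c else 0) = (if b then x * c else 0)"
  by auto

lemma sum_if_out: "(\<Sum>l\<in>A. if b then f l else (0::real)) = (if b then (\<Sum>l\<in>A. f l) else 0)"
  by auto

lemma form_delta1:
  fixes P :: "nat \<Rightarrow> nat \<Rightarrow> real"
  assumes "i < N"
  shows "(\<Sum>k<N. \<Sum>l<N. (if k = i then 1 else 0) * P k l * (if l = i then 1 else 0)) = P i i"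
  using assms by (simp add: if01_mult)

lemma form_delta2:
  fixes P :: "nat \<Rightarrow> nat \<Rightarrow> real"
  assumes "i < N" "j < N" "i \<noteq> j"
  shows "(\<Sum>k<N. \<Sum>l<N. ((if k = i then 1 else 0) + (if k = j then c else 0)) * P k l *
            ((if l = i then 1 else 0) + (if l = j then c else 0))) = P i i + c * P i j + c * P j i + c * c * P j j"
  using assms by (simp add: distrib_left distrib_right sum.distrib if01_mult sum_if_out)

lemma dd_sum_nonneg:
  fixes P r :: "nat \<Rightarrow> nat \<Rightarrow> real"
  assumes form: "\<And>v. 0 \<le> (\<Sum>k<N. \<Sum>l<N. v k * P k l * v l)"
    and Psym: "\<And>i j. i < N \<Longrightarrow> j < N \<Longrightarrow> P i j = P j i"
    and rsym: "\<And>i j. i < N \<Longrightarrow> j < N \<Longrightarrow> r i j = r j i"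
    and dd: "\<And>i. i < N \<Longrightarrow> (\<Sum>j<N. if j = i then 0 else \<bar>r i j\<bar>) \<le> r i i"
  shows "0 \<le> (\<Sum>i<N. \<Sum>j<N. P i j * r i j)"
proof -
  have Pd: "0 \<le> P i i" if "i < N" for i
    using form[of "\<lambda>k. if k = i then 1 else 0"] form_delta1[OF that, where P=P] by simp
  have Pij: "\<bar>P i j\<bar> \<le> (P i i + P j j) / 2" if "i < N" "j < N" "i \<noteq> j" for i j
  proof -
    have a: "0 \<le> P i i + 1 * P i j + 1 * P j i + 1 * 1 * P j j"
      using form[of "\<lambda>k. (if k = i then 1 else 0) + (if k = j then 1 else 0)"] form_delta2[OF that, where P=P and c=1] by simp
    have b: "0 \<le> P i i + (-1) * P i j + (-1) * P j i + (-1) * (-1) * P j j"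
      using form[of "\<lambda>k. (if k = i then 1 else 0) + (if k = j then -1 else 0)"] form_delta2[OF that, where P=P and c="-1"] by simp
    show ?thesis using a b Psym[OF that(1,2)] by (simp add: abs_le_iff)
  qed
  define od where "od i = (\<Sum>j<N. if j = i then 0 else \<bar>r i j\<bar>)" for i
  define g where "g i j = (if j = i then P i i * r i i else 0) - (1/2) * (if j = i then 0 else P i i * \<bar>r i j\<bar>)
      - (1/2) * (if j = i then 0 else P j j * \<bar>r i j\<bar>)" for i j
  have gle: "g i j \<le> P i j * r i j" if "i < N" "j < N" for i j
  proof (cases "j = i")
    case True then show ?thesis by (simp add: g_def)
  next
    case False
    have "- (P i j * r i j) \<le> \<bar>P i j * r i j\<bar>" by linarith
    also have "\<dots> = \<bar>P i j\<bar> * \<bar>r i j\<bar>" by (simp add: abs_mult)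
    also have "\<dots> \<le> ((P i i + P j j) / 2) * \<bar>r i j\<bar>"
      using Pij[OF that] False by (intro mult_right_mono) auto
    finally show ?thesis using False by (simp add: g_def algebra_simps)
  qed
  have "(\<Sum>i<N. \<Sum>j<N. g i j) \<le> (\<Sum>i<N. \<Sum>j<N. P i j * r i j)"
    using gle by (intro sum_mono) auto
  moreover have swap: "(\<Sum>i<N. \<Sum>j<N. if j = i then 0 else P j j * \<bar>r i j\<bar>) = (\<Sum>i<N. P i i * od i)"
  proof -
    have "(\<Sum>i<N. \<Sum>j<N. if j = i then 0 else P j j * \<bar>r i j\<bar>) = (\<Sum>j<N. \<Sum>i<N. if j = i then 0 else P j j * \<bar>r i j\<bar>)"
      by (rule sum.swap)
    also have "\<dots> = (\<Sum>j<N. \<Sum>i<N. if i = j then 0 else P j j * \<bar>r j i\<bar>)"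
      by (intro sum.cong refl) (auto simp: rsym)
    also have "\<dots> = (\<Sum>j<N. P j j * od j)"
      by (simp add: od_def sum_distrib_left if_distrib cong: if_cong)
    finally show ?thesis .
  qed
  moreover have "(\<Sum>i<N. \<Sum>j<N. g i j) = (\<Sum>i<N. P i i * (r i i - od i))"
  proof -
    have "(\<Sum>i<N. \<Sum>j<N. g i j) = (\<Sum>i<N. P i i * r i i) - (1/2) * (\<Sum>i<N. P i i * od i)
       - (1/2) * (\<Sum>i<N. \<Sum>j<N. if j = i then 0 else P j j * \<bar>r i j\<bar>)"
    proof -
      have "(\<Sum>j<N. g i j) = P i i * r i i - (1/2) * (P i i * od i)
         - (1/2) * (\<Sum>j<N. if j = i then 0 else P j j * \<bar>r i j\<bar>)" if "i < N" for i
      proof -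
        have "(\<Sum>j<N. g i j) = (\<Sum>j<N. (if j = i then P i i * r i i else 0)) - (1/2) * (\<Sum>j<N. (if j = i then 0 else P i i * \<bar>r i j\<bar>))
           - (1/2) * (\<Sum>j<N. if j = i then 0 else P j j * \<bar>r i j\<bar>)"
          unfolding g_def by (simp only: sum_subtractf sum_distrib_left)
        also have "(\<Sum>j<N. (if j = i then P i i * r i i else 0)) = P i i * r i i" using that by simp
        also have "(\<Sum>j<N. (if j = i then 0 else P i i * \<bar>r i j\<bar>)) = P i i * od i"
          unfolding od_def sum_distrib_left by (intro sum.cong) auto
        finally show ?thesis .
      qed
      then have "(\<Sum>i<N. \<Sum>j<N. g i j) = (\<Sum>i<N. P i i * r i i - (1/2) * (P i i * od i)
         - (1/2) * (\<Sum>j<N. if j = i then 0 else P j j * \<bar>r i j\<bar>))" by (intro sum.cong) auto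
      then show ?thesis by (simp only: sum_subtractf sum_distrib_left)
    qed
    also have "\<dots> = (\<Sum>i<N. P i i * (r i i - od i))"
      unfolding swap by (simp add: algebra_simps sum_subtractf)
    finally show ?thesis .
  qed
  moreover have "0 \<le> (\<Sum>i<N. P i i * (r i i - od i))"
    using Pd dd by (intro sum_nonneg mult_nonneg_nonneg) (auto simp: od_def)
  ultimately show ?thesis by linarith
qed


lemma sum_list_map_nth: "sum_list (map f xs) = (\<Sum>k<length xs. f (xs ! k))"
  by (simp add: sum_list_sum_nth atLeast0LessThan)

lemma sum_list_upt_lessThan: "sum_list (map f [0..<N]) = (\<Sum>j<N. f j)"
  by (simp add: interv_sum_list_conv_sum_set_nat atLeast0LessThan)

lemma dd_okD:
  assumes "dd_ok N a M V"
  shows "\<And>i. i < N \<Longrightarrow> (\<Sum>j<N. if j = i then 0 else \<bar>real_of_int (resid a M V i j)\<bar>) \<le> real_of_int (resid a M V i i)"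
    and "\<And>i j. i < N \<Longrightarrow> j < N \<Longrightarrow> tab M i j = tab M j i"
proof -
  fix i assume i: "i < N"
  have "(\<Sum>j<N. if j = i then 0 else \<bar>resid a M V i j\<bar>) \<le> resid a M V i i"
    using assms i unfolding dd_ok_def list_all_iff by (auto simp: sum_list_upt_lessThan)
  then have "real_of_int (\<Sum>j<N. if j = i then 0 else \<bar>resid a M V i j\<bar>) \<le> real_of_int (resid a M V i i)"
    by linarith
  then show "(\<Sum>j<N. if j = i then 0 else \<bar>real_of_int (resid a M V i j)\<bar>) \<le> real_of_int (resid a M V i i)"
    by (simp add: of_int_sum if_distrib cong: if_cong)
next
  fix i j assume "i < N" "j < N"
  then show "tab M i j = tab M j i" using assms unfolding dd_ok_def list_all_iff by auto
qed

lemma gram_sum: "real_of_int (gram V i j) = (\<Sum>k<length V. real_of_int (nth0 (V!k) i) * real_of_int (nth0 (V!k) j))"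
  unfolding gram_def sum_list_map_nth by (simp add: of_int_sum)

lemma cert_nonneg:
  fixes P :: "nat \<Rightarrow> nat \<Rightarrow> real"
  assumes form: "\<And>v. 0 \<le> (\<Sum>k<N. \<Sum>l<N. v k * P k l * v l)"
    and Psym: "\<And>i j. i < N \<Longrightarrow> j < N \<Longrightarrow> P i j = P j i"
    and dd: "dd_ok N a M V" and apos: "0 < a"
  shows "0 \<le> (\<Sum>i<N. \<Sum>j<N. P i j * real_of_int (tab M i j))"
proof -
  define r where "r i j = real_of_int (resid a M V i j)" for i j
  define w where "w k i = real_of_int (nth0 (V!k) i)" for k i
  have tabeq: "real_of_int (tab M i j) = (real_of_int (gram V i j) + r i j) / real_of_int a" for i j
    using apos by (simp add: r_def resid_def field_simps)
  have gsym: "gram V i j = gram V j i" for i j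
    unfolding gram_def by (simp add: mult.commute)
  have rsym: "r i j = r j i" if "i < N" "j < N" for i j
    using dd_okD(2)[OF dd that] gsym[of i j] by (simp add: r_def resid_def)
  have r1: "0 \<le> (\<Sum>i<N. \<Sum>j<N. P i j * r i j)"
    using dd_sum_nonneg[where N=N and P=P and r=r] form Psym rsym dd_okD(1)[OF dd] unfolding r_def by blast
  have "(\<Sum>i<N. \<Sum>j<N. P i j * real_of_int (gram V i j)) = (\<Sum>k<length V. \<Sum>i<N. \<Sum>j<N. w k i * P i j * w k j)"
  proof -
    have "(\<Sum>i<N. \<Sum>j<N. P i j * real_of_int (gram V i j)) = (\<Sum>i<N. \<Sum>j<N. \<Sum>k<length V. w k i * P i j * w k j)"
      by (simp add: gram_sum sum_distrib_left w_def mult_ac)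
    also have "\<dots> = (\<Sum>i<N. \<Sum>k<length V. \<Sum>j<N. w k i * P i j * w k j)"
      by (simp add: sum.swap[of _ "{..<N}" "{..<length V}"])
    also have "\<dots> = (\<Sum>k<length V. \<Sum>i<N. \<Sum>j<N. w k i * P i j * w k j)"
      by (rule sum.swap)
    finally show ?thesis .
  qed
  also have "\<dots> \<ge> 0" by (rule sum_nonneg) (rule form)
  finally have g1: "0 \<le> (\<Sum>i<N. \<Sum>j<N. P i j * real_of_int (gram V i j))" .
  have "(\<Sum>i<N. \<Sum>j<N. P i j * real_of_int (tab M i j)) =
     ((\<Sum>i<N. \<Sum>j<N. P i j * real_of_int (gram V i j)) + (\<Sum>i<N. \<Sum>j<N. P i j * r i j)) / real_of_int a"
    by (simp add: tabeq sum_divide_distrib[symmetric] sum.distrib distrib_left add_divide_distrib)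
  also have "\<dots> \<ge> 0" using g1 r1 apos by simp
  finally show ?thesis .
qed



definition gr :: "(nat \<times> nat) list \<Rightarrow> nat \<Rightarrow> nat \<Rightarrow> nat \<Rightarrow> bool" where
  "gr es n i j = (i < n \<and> j < n \<and> i \<noteq> j \<and>
     (i = 0 \<or> j = 0 \<or> (i < 11 \<and> j < 11 \<and> core_adj es i j) \<or> (11 \<le> i \<and> 11 \<le> j)))"

definition es_ok :: "(nat \<times> nat) list \<Rightarrow> bool" where
  "es_ok es = list_all (\<lambda>(a,b). a \<noteq> b \<and> 1 \<le> a \<and> a < 11 \<and> 1 \<le> b \<and> b < 11) es"

lemma es_okD: "es_ok es \<Longrightarrow> core_adj es i j \<Longrightarrow> i \<noteq> j \<and> 1 \<le> i \<and> i < 11 \<and> 1 \<le> j \<and> j < 11"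
  unfolding es_ok_def core_adj_def list_all_iff by auto

definition shape :: "int list list \<Rightarrow> nat \<Rightarrow> bool" where
  "shape M N = (length M = N \<and> list_all (\<lambda>r. length r = N) M)"

lemma tab_out: "shape M N \<Longrightarrow> N \<le> i \<or> N \<le> j \<Longrightarrow> tab M i j = 0"
  unfolding shape_def tab_def list_all_iff by auto

definition feas :: "nat \<Rightarrow> (nat \<Rightarrow> nat \<Rightarrow> bool) \<Rightarrow> real mat \<Rightarrow> bool" where
  "feas n E B = (psd n B \<and> mat_trace B = 1 \<and> (\<forall>i<n. \<forall>j<n. E i j \<longrightarrow> B $$ (i,j) = 0))"

definition tval :: "nat \<Rightarrow> real mat \<Rightarrow> real" where
  "tval n B = (\<Sum>i<n. \<Sum>j<n. B $$ (i,j))"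

lemma mat_trace_J: assumes "B \<in> carrier_mat n n"
  shows "mat_trace (B * mat n n (\<lambda>_. 1)) = tval n B"
  using assms unfolding mat_trace_def tval_def
  by (auto simp: scalar_prod_def atLeast0LessThan intro!: sum.cong)

lemma mat_trace_sum: assumes "B \<in> carrier_mat n n"
  shows "mat_trace B = (\<Sum>i<n. B $$ (i,i))"
  using assms unfolding mat_trace_def by auto

lemma theta_set: "lovasz_theta n E = Sup (tval n ` {B. feas n E B})"
proof -
  let ?P = "\<lambda>B. psd n B \<and> mat_trace B = 1 \<and> (\<forall>i<n. \<forall>j<n. E i j \<longrightarrow> B $$ (i,j) = 0)"
  have "{mat_trace (B * mat n n (\<lambda>_. 1)) | B. ?P B} = (\<lambda>B. mat_trace (B * mat n n (\<lambda>_. 1))) ` {B. ?P B}"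
    by blast
  also have "\<dots> = tval n ` {B. feas n E B}"
    unfolding feas_def by (intro image_cong refl) (auto simp: psd_def mat_trace_J)
  finally show ?thesis unfolding lovasz_theta_def by simp
qed

lemma quad_form: assumes "B \<in> carrier_mat n n" "x \<in> carrier_vec n"
  shows "x \<bullet> (B *\<^sub>v x) = (\<Sum>i<n. \<Sum>j<n. x$i * B$$(i,j) * x$j)"
  using assms
  by (auto simp: scalar_prod_def atLeast0LessThan sum_distrib_left mult_ac intro!: sum.cong)

lemma psd_form: assumes "psd n B" "N \<le> n"
  shows "0 \<le> (\<Sum>k<N. \<Sum>l<N. v k * B$$(k,l) * v l)"
proof -
  define x where "x = vec n (\<lambda>i. if i < N then v i else 0)"
  have B: "B \<in> carrier_mat n n" using assms unfolding psd_def by auto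
  have "0 \<le> x \<bullet> (B *\<^sub>v x)" using assms unfolding psd_def x_def by auto
  also have "\<dots> = (\<Sum>i<n. \<Sum>j<n. x$i * B$$(i,j) * x$j)" by (rule quad_form[OF B]) (simp add: x_def)
  also have "\<dots> = (\<Sum>i<N. \<Sum>j<n. x$i * B$$(i,j) * x$j)"
    using assms(2) by (intro sum.mono_neutral_right) (auto simp: x_def)
  also have "\<dots> = (\<Sum>i<N. \<Sum>j<N. x$i * B$$(i,j) * x$j)"
    using assms(2) by (intro sum.cong refl sum.mono_neutral_right) (auto simp: x_def)
  also have "\<dots> = (\<Sum>k<N. \<Sum>l<N. v k * B$$(k,l) * v l)"
    using assms(2) by (intro sum.cong refl) (auto simp: x_def)
  finally show ?thesis .
qed

lemma psd_sym: assumes "psd n B" "i < n" "j < n" shows "B $$ (i,j) = B $$ (j,i)"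
proof -
  have B: "B \<in> carrier_mat n n" "transpose_mat B = B" using assms(1) unfolding psd_def by auto
  have "B $$ (i,j) = (transpose_mat B) $$ (i,j)" using B by simp
  also have "\<dots> = B $$ (j,i)" using B(1) assms(2,3) by auto
  finally show ?thesis .
qed



lemma theta_ub:
  fixes a s u :: int
  assumes n: "11 \<le> n" and dd: "dd_ok 11 a M V" and a: "0 < a" and s: "0 < s" and u: "0 \<le> u"
    and sh: "shape M 11" and esok: "es_ok es"
    and ent: "\<forall>i<11. \<forall>j<11. core_adj es i j \<or> tab M i j = (if i = 0 \<or> j = 0 then 0 else if i = j then u else -s)"
    and fe: "feas n (gr es n) B"
  shows "tval n B \<le> real_of_int u / real_of_int s + 2"
proof -
  have psdB: "psd n B" and trB: "mat_trace B = 1" and edB: "\<And>i j. i<n \<Longrightarrow> j<n \<Longrightarrow> gr es n i j \<Longrightarrow> B $$ (i,j) = 0"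
    using fe unfolding feas_def by auto
  have Bc: "B \<in> carrier_mat n n" using psdB unfolding psd_def by auto
  define t1 where "t1 = real_of_int u / real_of_int s + 1"
  define T where "T = t1 + 1"
  have us: "real_of_int u / real_of_int s \<ge> 0" using u s by simp
  have t1pos: "t1 > 0" using us unfolding t1_def by linarith
  have ust: "real_of_int u / real_of_int s = t1 - 1" unfolding t1_def by simp
  define z where "z i = (if 1 \<le> i \<and> i < 11 then 1 else - t1)" for i :: nat
  define Z where "Z i j = (T/t1) * (real_of_int (tab M i j) / real_of_int s) + (1/t1) * (z i * z j)" for i j
  have tab0: "tab M i j = 0" if "\<not> (1 \<le> i \<and> i < 11) \<or> \<not> (1 \<le> j \<and> j < 11)" for i j
  proof (cases "11 \<le> i \<or> 11 \<le> j")
    case True then show ?thesis using tab_out[OF sh] by blast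
  next
    case False
    then have ij: "i < 11" "j < 11" by auto
    have nc: "\<not> core_adj es i j" using es_okD[OF esok, of i j] that by auto
    have "core_adj es i j \<or> tab M i j = (if i = 0 \<or> j = 0 then 0 else if i = j then u else -s)"
      using ent ij by blast
    then show ?thesis using nc that ij by auto
  qed
  have key: "gr es n i j \<or> Z i j = (if i = j then T else 0) - 1" if ij: "i < n" "j < n" for i j
  proof -
    consider "1 \<le> i \<and> i < 11" "1 \<le> j \<and> j < 11"
      | "\<not> (1 \<le> i \<and> i < 11)" "\<not> (1 \<le> j \<and> j < 11)"
      | "1 \<le> i \<and> i < 11" "\<not> (1 \<le> j \<and> j < 11)"
      | "\<not> (1 \<le> i \<and> i < 11)" "1 \<le> j \<and> j < 11" by blast
    then show ?thesis
    proof cases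
      case 1
      show ?thesis
      proof (cases "core_adj es i j")
        case True
        then have "gr es n i j" using es_okD[OF esok True] ij unfolding gr_def by auto
        then show ?thesis by simp
      next
        case False
        have "core_adj es i j \<or> tab M i j = (if i = 0 \<or> j = 0 then 0 else if i = j then u else -s)"
          using ent 1 by blast
        then have tb: "tab M i j = (if i = j then u else -s)" using False 1 by auto
        have zz: "z i = 1" "z j = 1" using 1 by (auto simp: z_def)
        show ?thesis
        proof (cases "i = j")
          case True
          have "Z i j = (T/t1) * (t1 - 1) + 1/t1"
            using tb True zz ust by (simp add: Z_def)
          also have "\<dots> = T - 1" using t1pos unfolding T_def by (simp add: field_simps)
          finally show ?thesis using True by simp
        next
          case False
          have "Z i j = (T/t1) * (-1) + 1/t1"
            using tb False zz s by (simp add: Z_def)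
          also have "\<dots> = - 1" using t1pos unfolding T_def by (simp add: field_simps)
          finally show ?thesis using False by simp
        qed
      qed
    next
      case 2
      have tb: "tab M i j = 0" using tab0 2 by blast
      have zz: "z i = - t1" "z j = - t1" using 2 by (auto simp: z_def)
      show ?thesis
      proof (cases "i = j")
        case True
        have "Z i j = t1" using tb zz t1pos by (simp add: Z_def power2_eq_square)
        then show ?thesis using True unfolding T_def by simp
      next
        case False
        then have "gr es n i j" using 2 ij unfolding gr_def by auto
        then show ?thesis by simp
      qed
    next
      case 3
      have tb: "tab M i j = 0" using tab0 3 by blast
      have zz: "z i = 1" "z j = - t1" using 3 by (auto simp: z_def)
      have "Z i j = -1" using tb zz t1pos by (simp add: Z_def)
      then show ?thesis using 3 by auto
    next
      case 4
      have tb: "tab M i j = 0" using tab0 4 by blast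
      have zz: "z i = - t1" "z j = 1" using 4 by (auto simp: z_def)
      have "Z i j = -1" using tb zz t1pos by (simp add: Z_def)
      then show ?thesis using 4 by auto
    qed
  qed
  have eq: "B$$(i,j) * Z i j = B$$(i,j) * ((if i = j then T else 0) - 1)" if "i < n" "j < n" for i j
    using key[OF that] edB[OF that] by auto
  have S1: "0 \<le> (\<Sum>i<n. \<Sum>j<n. B$$(i,j) * real_of_int (tab M i j))"
  proof -
    have "(\<Sum>i<n. \<Sum>j<n. B$$(i,j) * real_of_int (tab M i j)) = (\<Sum>i<11. \<Sum>j<n. B$$(i,j) * real_of_int (tab M i j))"
      using n by (intro sum.mono_neutral_right) (auto simp: tab_out[OF sh])
    also have "\<dots> = (\<Sum>i<11. \<Sum>j<11. B$$(i,j) * real_of_int (tab M i j))"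
      using n by (intro sum.cong refl sum.mono_neutral_right) (auto simp: tab_out[OF sh])
    also have "\<dots> \<ge> 0"
      by (rule cert_nonneg[OF _ _ dd a]) (use psd_form[OF psdB n] psd_sym[OF psdB] n in auto)
    finally show ?thesis .
  qed
  have S2: "0 \<le> (\<Sum>i<n. \<Sum>j<n. z i * B$$(i,j) * z j)"
    by (rule psd_form[OF psdB]) simp
  have "(\<Sum>i<n. \<Sum>j<n. B$$(i,j) * Z i j) =
      (T/t1/real_of_int s) * (\<Sum>i<n. \<Sum>j<n. B$$(i,j) * real_of_int (tab M i j)) + (1/t1) * (\<Sum>i<n. \<Sum>j<n. z i * B$$(i,j) * z j)"
    by (simp add: Z_def distrib_left sum.distrib sum_distrib_left mult_ac)
  also have "\<dots> \<ge> 0" using S1 S2 t1pos s T_def by (intro add_nonneg_nonneg mult_nonneg_nonneg) auto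
  finally have pos: "0 \<le> (\<Sum>i<n. \<Sum>j<n. B$$(i,j) * Z i j)" .
  have "(\<Sum>i<n. \<Sum>j<n. B$$(i,j) * Z i j) = (\<Sum>i<n. \<Sum>j<n. B$$(i,j) * ((if i = j then T else 0) - 1))"
    using eq by (intro sum.cong refl) auto
  also have "\<dots> = (\<Sum>i<n. T * B$$(i,i)) - tval n B"
  proof -
    have e: "B$$(i,j) * ((if i = j then T else 0) - 1) = (if j = i then T * B$$(i,i) else 0) - B$$(i,j)" for i j
      by (auto simp: algebra_simps)
    show ?thesis unfolding e tval_def by (simp add: sum_subtractf)
  qed
  also have "(\<Sum>i<n. T * B$$(i,i)) = T" using trB mat_trace_sum[OF Bc] by (simp add: sum_distrib_left[symmetric])
  finally have "tval n B \<le> T" using pos by simp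
  then show ?thesis unfolding T_def t1_def by simp
qed



lemma sq_form: "(\<Sum>k<N. \<Sum>l<N. v k * ((x k::real) * x l) * v l) = (\<Sum>k<N. v k * x k)^2"
  by (simp add: power2_eq_square sum_product mult_ac)

lemma theta_lb:
  fixes a c :: int
  assumes n: "12 \<le> n" and dd: "dd_ok 12 a M V" and a: "0 < a" and sh: "shape M 12" and esok: "es_ok es"
    and ed: "\<forall>i<12. \<forall>j<12. core_adj es i j \<longrightarrow> tab M i j = 0"
    and z0: "\<forall>j<12. tab M 0 j = 0"
    and c: "c = sum_list (map (\<lambda>i. tab M i i) [0..<12])" and cpos: "0 < c"
    and Bdef: "B = mat n n (\<lambda>(i,j). real_of_int (tab M i j) / real_of_int c)"
  shows "feas n (gr es n) B"
    and "tval n B = real_of_int (sum_list (map (\<lambda>i. sum_list (map (\<lambda>j. tab M i j) [0..<12])) [0..<12])) / real_of_int c"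
proof -
  have tsym: "tab M i j = tab M j i" for i j
  proof (cases "i < 12 \<and> j < 12")
    case True then show ?thesis using dd_okD(2)[OF dd] by blast
  next
    case False then show ?thesis using tab_out[OF sh] by (metis not_le)
  qed
  have Bc: "B \<in> carrier_mat n n" unfolding Bdef by simp
  have Bij: "B $$ (i,j) = real_of_int (tab M i j) / real_of_int c" if "i < n" "j < n" for i j
    using that unfolding Bdef by simp
  have cr: "real_of_int c > 0" using cpos by simp
  have restrict: "(\<Sum>i<n. \<Sum>j<n. f i j * real_of_int (tab M i j)) = (\<Sum>i<12. \<Sum>j<12. f i j * real_of_int (tab M i j))" for f
  proof -
    have "(\<Sum>i<n. \<Sum>j<n. f i j * real_of_int (tab M i j)) = (\<Sum>i<12. \<Sum>j<n. f i j * real_of_int (tab M i j))"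
      using n by (intro sum.mono_neutral_right) (auto simp: tab_out[OF sh])
    also have "\<dots> = (\<Sum>i<12. \<Sum>j<12. f i j * real_of_int (tab M i j))"
      using n by (intro sum.cong refl sum.mono_neutral_right) (auto simp: tab_out[OF sh])
    finally show ?thesis .
  qed
  have psdB: "psd n B"
    unfolding psd_def
  proof (intro conjI ballI)
    show "B \<in> carrier_mat n n" by (rule Bc)
    show "transpose_mat B = B"
      by (rule eq_matI) (auto simp: Bdef tsym)
    fix x :: "real vec" assume x: "x \<in> carrier_vec n"
    have "x \<bullet> (B *\<^sub>v x) = (\<Sum>i<n. \<Sum>j<n. x$i * B$$(i,j) * x$j)" by (rule quad_form[OF Bc x])
    also have "\<dots> = (\<Sum>i<n. \<Sum>j<n. (x$i * x$j / real_of_int c) * real_of_int (tab M i j))"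
      by (intro sum.cong refl) (simp add: Bij)
    also have "\<dots> = (\<Sum>i<12. \<Sum>j<12. (x$i * x$j / real_of_int c) * real_of_int (tab M i j))"
      by (rule restrict)
    also have "\<dots> = (\<Sum>i<12. \<Sum>j<12. (x$i * x$j) * real_of_int (tab M i j)) / real_of_int c"
      by (simp add: sum_divide_distrib)
    also have "\<dots> \<ge> 0"
    proof -
      have "0 \<le> (\<Sum>i<12. \<Sum>j<12. (x$i * x$j) * real_of_int (tab M i j))"
        by (rule cert_nonneg[OF _ _ dd a]) (auto simp: sq_form)
      then show ?thesis using cr by simp
    qed
    finally show "0 \<le> x \<bullet> (B *\<^sub>v x)" .
  qed
  have tr: "mat_trace B = 1"
  proof -
    have "mat_trace B = (\<Sum>i<n. B $$ (i,i))" by (rule mat_trace_sum[OF Bc])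
    also have "\<dots> = (\<Sum>i<n. real_of_int (tab M i i) / real_of_int c)" by (intro sum.cong refl) (simp add: Bij)
    also have "\<dots> = (\<Sum>i<12. real_of_int (tab M i i) / real_of_int c)"
      using n by (intro sum.mono_neutral_right) (auto simp: tab_out[OF sh])
    also have "\<dots> = real_of_int c / real_of_int c"
      unfolding sum_divide_distrib[symmetric] c sum_list_upt_lessThan of_int_sum by simp
    finally show ?thesis using cr by simp
  qed
  have edges: "B $$ (i,j) = 0" if "i < n" "j < n" "gr es n i j" for i j
  proof -
    have "tab M i j = 0"
    proof (cases "12 \<le> i \<or> 12 \<le> j")
      case True then show ?thesis using tab_out[OF sh] by blast
    next
      case False
      then have ij: "i < 12" "j < 12" by auto
      from that(3) have "i \<noteq> j" "i = 0 \<or> j = 0 \<or> core_adj es i j \<or> (11 \<le> i \<and> 11 \<le> j)"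
        unfolding gr_def by auto
      then show ?thesis using ij z0 ed tsym[of i j] by auto
    qed
    then show ?thesis using that by (simp add: Bij)
  qed
  show "feas n (gr es n) B" unfolding feas_def using psdB tr edges by auto
  have "tval n B = (\<Sum>i<n. \<Sum>j<n. 1 / real_of_int c * real_of_int (tab M i j))"
    unfolding tval_def by (intro sum.cong refl) (simp add: Bij)
  also have "\<dots> = (\<Sum>i<12. \<Sum>j<12. 1 / real_of_int c * real_of_int (tab M i j))" by (rule restrict)
  also have "\<dots> = real_of_int (sum_list (map (\<lambda>i. sum_list (map (\<lambda>j. tab M i j) [0..<12])) [0..<12])) / real_of_int c"
    by (simp add: sum_list_upt_lessThan of_int_sum sum_divide_distrib)
  finally show "tval n B = real_of_int (sum_list (map (\<lambda>i. sum_list (map (\<lambda>j. tab M i j) [0..<12])) [0..<12])) / real_of_int c" .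
qed



lemma iso_transport:
  assumes iso: "isomorphic n G H" and fe: "feas n G B"
  shows "\<exists>B'. feas n H B' \<and> tval n B' = tval n B"
proof -
  obtain f where bf: "bij_betw f {..<n} {..<n}" and fe_iff: "\<And>i j. i < n \<Longrightarrow> j < n \<Longrightarrow> G i j \<longleftrightarrow> H (f i) (f j)"
    using iso unfolding isomorphic_def atLeast0LessThan by blast
  define g where "g = inv_into {..<n} f"
  have bg: "bij_betw g {..<n} {..<n}" unfolding g_def by (rule bij_betw_inv_into[OF bf])
  have fg: "f (g i) = i" if "i < n" for i
    unfolding g_def using bf that by (simp add: bij_betw_def f_inv_into_f)
  have gn: "g i < n" if "i < n" for i using bg that by (auto simp: bij_betw_def)
  have psdB: "psd n B" and trB: "mat_trace B = 1" and edB: "\<And>i j. i<n \<Longrightarrow> j<n \<Longrightarrow> G i j \<Longrightarrow> B $$ (i,j) = 0"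
    using fe unfolding feas_def by auto
  have Bc: "B \<in> carrier_mat n n" using psdB unfolding psd_def by auto
  define B' where "B' = mat n n (\<lambda>(i,j). B $$ (g i, g j))"
  have B'c: "B' \<in> carrier_mat n n" unfolding B'_def by simp
  have B'ij: "B' $$ (i,j) = B $$ (g i, g j)" if "i < n" "j < n" for i j using that unfolding B'_def by simp
  have re: "(\<Sum>i<n. \<phi> (g i)) = (\<Sum>k<n. \<phi> k)" for \<phi> :: "nat \<Rightarrow> real"
    by (rule sum.reindex_bij_betw[OF bg])
  have psd': "psd n B'"
    unfolding psd_def
  proof (intro conjI ballI)
    show "B' \<in> carrier_mat n n" by (rule B'c)
    show "transpose_mat B' = B'"
      by (rule eq_matI) (auto simp: B'_def psd_sym[OF psdB] gn)
    fix x :: "real vec" assume x: "x \<in> carrier_vec n"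
    define y where "y = vec n (\<lambda>k. x $ (f k))"
    have "x \<bullet> (B' *\<^sub>v x) = (\<Sum>i<n. \<Sum>j<n. x$i * B'$$(i,j) * x$j)" by (rule quad_form[OF B'c x])
    also have "\<dots> = (\<Sum>i<n. \<Sum>j<n. x$(f (g i)) * B$$(g i, g j) * x$(f (g j)))"
      by (intro sum.cong refl) (simp add: B'ij fg)
    also have "\<dots> = (\<Sum>k<n. \<Sum>j<n. x$(f k) * B$$(k, g j) * x$(f (g j)))"
      by (rule re)
    also have "\<dots> = (\<Sum>k<n. \<Sum>l<n. x$(f k) * B$$(k, l) * x$(f l))"
      by (intro sum.cong refl re)
    also have "\<dots> = (\<Sum>k<n. \<Sum>l<n. y$k * B$$(k, l) * y$l)"
      by (intro sum.cong refl) (simp add: y_def)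
    also have "\<dots> = y \<bullet> (B *\<^sub>v y)" by (rule quad_form[OF Bc, symmetric]) (simp add: y_def)
    also have "\<dots> \<ge> 0" using psdB unfolding psd_def y_def by auto
    finally show "0 \<le> x \<bullet> (B' *\<^sub>v x)" .
  qed
  have tr': "mat_trace B' = 1"
  proof -
    have "mat_trace B' = (\<Sum>i<n. B $$ (g i, g i))" using mat_trace_sum[OF B'c] by (simp add: B'ij)
    also have "\<dots> = (\<Sum>k<n. B $$ (k,k))" by (rule re)
    also have "\<dots> = 1" using trB mat_trace_sum[OF Bc] by simp
    finally show ?thesis .
  qed
  have ed': "B' $$ (i,j) = 0" if "i < n" "j < n" "H i j" for i j
  proof -
    have "G (g i) (g j)" using fe_iff[OF gn gn, of i j] that fg by simp
    then show ?thesis using edB gn that by (simp add: B'ij)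
  qed
  have tv: "tval n B' = tval n B"
  proof -
    have "tval n B' = (\<Sum>i<n. \<Sum>j<n. B $$ (g i, g j))" unfolding tval_def by (intro sum.cong refl) (simp add: B'ij)
    also have "\<dots> = (\<Sum>k<n. \<Sum>j<n. B $$ (k, g j))" by (rule re)
    also have "\<dots> = (\<Sum>k<n. \<Sum>l<n. B $$ (k, l))" by (intro sum.cong refl re)
    finally show ?thesis unfolding tval_def .
  qed
  show ?thesis using psd' tr' ed' tv unfolding feas_def by blast
qed

lemma theta_ge:
  assumes fe: "feas n E B" and ub: "\<And>B. feas n E B \<Longrightarrow> tval n B \<le> T"
  shows "tval n B \<le> lovasz_theta n E"
  unfolding theta_set
  by (rule cSup_upper) (use fe ub in \<open>auto intro!: bdd_aboveI\<close>)

lemma theta_le: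
  assumes fe: "feas n E B" and ub: "\<And>B. feas n E B \<Longrightarrow> tval n B \<le> T"
  shows "lovasz_theta n E \<le> T"
  unfolding theta_set
  by (rule cSup_least) (use fe ub in auto)



lemma core_adj_sym: "core_adj es i j = core_adj es j i"
  unfolding core_adj_def by auto

lemma gr_simple: "simple_graph n (gr es n)"
  unfolding simple_graph_def gr_def using core_adj_sym by blast

lemma gr_0: "0 < j \<Longrightarrow> j < n \<Longrightarrow> gr es n 0 j" "0 < j \<Longrightarrow> j < n \<Longrightarrow> gr es n j 0"
  unfolding gr_def by auto

lemma gr_connected: assumes "0 < n" shows "connected_graph n (gr es n)"
  unfolding connected_graph_def
proof (intro conjI allI impI)
  show "0 < n" by fact
  fix i j assume ij: "i < n" "j < n"
  have a: "(gr es n)\<^sup>*\<^sup>* i 0"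
    using ij by (cases "i = 0") (auto intro: gr_0)
  have b: "(gr es n)\<^sup>*\<^sup>* 0 j"
    using ij by (cases "j = 0") (auto intro: gr_0)
  show "(gr es n)\<^sup>*\<^sup>* i j" using a b by (rule rtranclp_trans)
qed

lemma gr_indep_es: "\<not> (1 \<le> i \<and> i < 11) \<Longrightarrow> gr es n i j = gr es' n i j"
  "\<not> (1 \<le> j \<and> j < 11) \<Longrightarrow> gr es n i j = gr es' n i j"
  unfolding gr_def by auto

lemma deg_hub: "degree n (gr es n) 0 = n - 1"
proof -
  have "{j. j < n \<and> gr es n 0 j} = {1..<n}" unfolding gr_def by auto
  then show ?thesis unfolding degree_def by simp
qed

lemma deg_core: assumes "es_ok es" "1 \<le> i" "i < 11" "11 \<le> n"
  shows "degree n (gr es n) i = length (filter (gr es 11 i) [0..<11])"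
proof -
  have "{j. j < n \<and> gr es n i j} = set (filter (gr es 11 i) [0..<11])"
    using assms es_okD[OF assms(1), of i] unfolding gr_def by fastforce
  then show ?thesis unfolding degree_def by (metis distinct_card distinct_filter distinct_upt)
qed

lemma deg_core_le: assumes "es_ok es" "1 \<le> i" "i < 11" "11 \<le> n"
  shows "degree n (gr es n) i \<le> 11"
  using deg_core[OF assms] by (metis diff_zero length_filter_le length_upt)

lemma gr_irregular: assumes "es_ok es" "14 \<le> n" shows "irregular n (gr es n)"
proof -
  have "degree n (gr es n) 1 \<le> 11" using deg_core_le[OF assms(1)] assms by auto
  moreover have "degree n (gr es n) 0 = n - 1" by (rule deg_hub)
  ultimately have "degree n (gr es n) 0 \<noteq> degree n (gr es n) 1" using assms by auto
  then show ?thesis unfolding irregular_def using assms by (intro exI[of _ 0] conjI exI[of _ 1]) auto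
qed



definition indep_list :: "(nat \<times> nat) list \<Rightarrow> nat list \<Rightarrow> bool" where
  "indep_list es xs = list_all (\<lambda>a. list_all (\<lambda>b. \<not> core_adj es a b) xs) xs"

definition piece_chk :: "(nat \<times> nat) list \<Rightarrow> nat list \<Rightarrow> bool" where
  "piece_chk es P = list_all (\<lambda>xs. length xs \<le> 2 \<or> \<not> indep_list es xs) (subseqs P)"

definition alpha_chk :: "(nat \<times> nat) list \<Rightarrow> nat list \<Rightarrow> nat list \<Rightarrow> bool" where
  "alpha_chk es P1 P2 = (piece_chk es P1 \<and> piece_chk es P2 \<and> list_all (\<lambda>i. i \<in> set P1 \<or> i \<in> set P2) [1..<11])"

definition wit_chk :: "(nat \<times> nat) list \<Rightarrow> nat list \<Rightarrow> bool" where
  "wit_chk es w = (length w = 4 \<and> distinct w \<and> list_all (\<lambda>a. 1 \<le> a \<and> a < 11) w \<and> indep_list es w)"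

definition col_chk :: "(nat \<times> nat) list \<Rightarrow> nat list \<Rightarrow> bool" where
  "col_chk es cl = (list_all (\<lambda>i. cl!i < 3) [1..<11] \<and>
     list_all (\<lambda>i. list_all (\<lambda>j. core_adj es i j \<longrightarrow> cl!i \<noteq> cl!j) [1..<11]) [1..<11])"

lemma piece_le:
  assumes chk: "piece_chk es P" and T: "T \<subseteq> set P" and ind: "\<forall>a\<in>T. \<forall>b\<in>T. \<not> core_adj es a b"
  shows "card T \<le> 2"
proof -
  have "T \<in> set ` set (subseqs P)" using T by (intro subset_subseqs) simp
  then obtain xs where xs: "xs \<in> set (subseqs P)" "T = set xs" by blast
  have "indep_list es xs" using ind xs(2) unfolding indep_list_def list_all_iff by auto
  then have "length xs \<le> 2" using chk xs(1) unfolding piece_chk_def list_all_iff by auto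
  moreover have "card T \<le> length xs" using xs(2) card_length[of xs] by simp
  ultimately show ?thesis by linarith
qed

lemma core_indep_le:
  assumes chk: "alpha_chk es P1 P2" and T: "T \<subseteq> {1..<11}" and ind: "\<forall>a\<in>T. \<forall>b\<in>T. \<not> core_adj es a b"
  shows "card T \<le> 4"
proof -
  have c: "piece_chk es P1" "piece_chk es P2" "\<forall>i\<in>{1..<11}. i \<in> set P1 \<or> i \<in> set P2"
    using chk unfolding alpha_chk_def list_all_iff by auto
  have Tu: "T = (T \<inter> set P1) \<union> (T \<inter> set P2)" using T c(3) by auto
  have "card (T \<inter> set P1) \<le> 2" by (rule piece_le[OF c(1)]) (use ind in auto)
  moreover have "card (T \<inter> set P2) \<le> 2" by (rule piece_le[OF c(2)]) (use ind in auto)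
  moreover have "card T \<le> card (T \<inter> set P1) + card (T \<inter> set P2)"
    by (subst Tu) (rule card_Un_le)
  ultimately show ?thesis by linarith
qed

lemma alpha_gr:
  assumes esok: "es_ok es" and chk: "alpha_chk es P1 P2" and wc: "wit_chk es w" and n: "12 \<le> n"
  shows "independence_number n (gr es n) = 5"
proof -
  let ?A = "{card S | S. S \<subseteq> {0..<n} \<and> (\<forall>i\<in>S. \<forall>j\<in>S. \<not> gr es n i j)}"
  have fin: "finite ?A"
  proof (rule finite_subset)
    show "?A \<subseteq> card ` Pow {0..<n}" by blast
  qed simp
  have ub: "card S \<le> 5" if S: "S \<subseteq> {0..<n}" "\<forall>i\<in>S. \<forall>j\<in>S. \<not> gr es n i j" for S
  proof (cases "0 \<in> S")
    case True
    have "j = 0" if "j \<in> S" for j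
    proof (rule ccontr)
      assume "j \<noteq> 0"
      then have "gr es n 0 j" using that S(1) by (intro gr_0(1)) auto
      then show False using S(2) True that by blast
    qed
    then have "S \<subseteq> {0}" by blast
    then have "card S \<le> 1" using card_mono[of "{0}" S] by simp
    then show ?thesis by simp
  next
    case False
    define S1 where "S1 = S \<inter> {1..<11}"
    define S2 where "S2 = S \<inter> {11..<n}"
    have Su: "S = S1 \<union> S2"
    proof
      show "S \<subseteq> S1 \<union> S2"
      proof
        fix x assume x: "x \<in> S"
        have "x \<noteq> 0"
        proof
          assume "x = 0" with x False show False by simp
        qed
        moreover have "x < n" using x S(1) by auto
        ultimately show "x \<in> S1 \<union> S2" using x unfolding S1_def S2_def by auto
      qed
      show "S1 \<union> S2 \<subseteq> S" unfolding S1_def S2_def by auto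
    qed
    have c1: "card S1 \<le> 4"
    proof (rule core_indep_le[OF chk])
      show "S1 \<subseteq> {1..<11}" unfolding S1_def by auto
      show "\<forall>a\<in>S1. \<forall>b\<in>S1. \<not> core_adj es a b"
      proof (intro ballI notI)
        fix a b assume ab: "a \<in> S1" "b \<in> S1" "core_adj es a b"
        then have "gr es n a b" using es_okD[OF esok ab(3)] n unfolding gr_def S1_def by auto
        then show False using S ab unfolding S1_def by auto
      qed
    qed
    have fS2: "finite S2" unfolding S2_def by auto
    have eqS2: "\<forall>x\<in>S2. \<forall>y\<in>S2. x = y"
    proof (intro ballI, rule ccontr)
      fix x y assume xy: "x \<in> S2" "y \<in> S2" "x \<noteq> y"
      then have "gr es n x y" unfolding gr_def S2_def by auto
      then show False using S xy unfolding S2_def by auto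
    qed
    have c2: "card S2 \<le> 1" using card_le_Suc0_iff_eq[OF fS2] eqS2 by simp
    have "card S \<le> card S1 + card S2" unfolding Su by (rule card_Un_le)
    then show ?thesis using c1 c2 by linarith
  qed
  have wit: "5 \<in> ?A"
  proof -
    define S where "S = insert 11 (set w)"
    have w: "length w = 4" "distinct w" "\<forall>a\<in>set w. 1 \<le> a \<and> a < 11" "\<forall>a\<in>set w. \<forall>b\<in>set w. \<not> core_adj es a b"
      using wc unfolding wit_chk_def indep_list_def list_all_iff by auto
    have "11 \<notin> set w" using w(3) by auto
    then have cS: "card S = 5" unfolding S_def using w(1,2) by (simp add: distinct_card)
    have sub: "S \<subseteq> {0..<n}" unfolding S_def using w(3) n by auto
    have ind: "\<forall>i\<in>S. \<forall>j\<in>S. \<not> gr es n i j"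
    proof (intro ballI notI)
      fix i j assume ij: "i \<in> S" "j \<in> S" "gr es n i j"
      have r: "i = 11 \<or> (1 \<le> i \<and> i < 11)" "j = 11 \<or> (1 \<le> j \<and> j < 11)"
        using ij(1,2) w(3) unfolding S_def by auto
      from ij(3) have g: "i \<noteq> j" "i = 0 \<or> j = 0 \<or> (i < 11 \<and> j < 11 \<and> core_adj es i j) \<or> (11 \<le> i \<and> 11 \<le> j)"
        unfolding gr_def by auto
      then have "core_adj es i j" using r by auto
      moreover have "i \<in> set w" "j \<in> set w" using ij(1,2) r \<open>core_adj es i j\<close> es_okD[OF esok] unfolding S_def by auto
      ultimately show False using w(4) by blast
    qed
    show ?thesis using cS sub ind by (intro CollectI exI[of _ S]) auto
  qed
  show ?thesis unfolding independence_number_def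
    by (rule Max_eqI[OF fin]) (use ub wit in auto)
qed

definition colf :: "nat list \<Rightarrow> nat \<Rightarrow> nat" where
  "colf cl i = (if i = 0 then 0 else if i < 11 then 1 + cl!i else i - 10)"

lemma col_chkD:
  assumes esok: "es_ok es" and cc: "col_chk es cl"
  shows "\<And>i. 1 \<le> i \<Longrightarrow> i < 11 \<Longrightarrow> cl!i < 3"
    and "\<And>i j. core_adj es i j \<Longrightarrow> cl!i \<noteq> cl!j"
proof -
  fix i :: nat assume "1 \<le> i" "i < 11"
  then show "cl!i < 3" using cc unfolding col_chk_def list_all_iff by simp
next
  fix i j :: nat assume a: "core_adj es i j"
  have r: "i \<in> set [1..<11]" "j \<in> set [1..<11]" using es_okD[OF esok a] by auto
  have "\<forall>i\<in>set [1..<11]. \<forall>j\<in>set [1..<11]. core_adj es i j \<longrightarrow> cl!i \<noteq> cl!j"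
    using cc unfolding col_chk_def list_all_iff by blast
  then show "cl!i \<noteq> cl!j" using r a by blast
qed

lemma colf_ok:
  assumes esok: "es_ok es" and cc: "col_chk es cl" and n: "14 \<le> n"
  shows "\<And>i. i < n \<Longrightarrow> colf cl i < n - 10"
    and "\<And>i j. gr es n i j \<Longrightarrow> colf cl i \<noteq> colf cl j"
proof -
  fix i assume i: "i < n"
  show "colf cl i < n - 10"
  proof (cases "1 \<le> i \<and> i < 11")
    case True then show ?thesis using col_chkD(1)[OF esok cc, of i] n unfolding colf_def by auto
  next
    case False then show ?thesis using i n unfolding colf_def by auto
  qed
next
  fix i j assume g: "gr es n i j"
  then have g': "i \<noteq> j" "i = 0 \<or> j = 0 \<or> (i < 11 \<and> j < 11 \<and> core_adj es i j) \<or> (11 \<le> i \<and> 11 \<le> j)"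
    unfolding gr_def by auto
  show "colf cl i \<noteq> colf cl j"
  proof (cases "core_adj es i j")
    case True
    then show ?thesis using col_chkD(2)[OF esok cc True] es_okD[OF esok True] unfolding colf_def by auto
  next
    case False
    then show ?thesis using g' unfolding colf_def by auto
  qed
qed

lemma clique_K0: "\<forall>i\<in>insert 0 {11..<n}. \<forall>j\<in>insert 0 {11..<n}. i \<noteq> j \<longrightarrow> gr es n i j"
  unfolding gr_def by auto

lemma card_K0: "14 \<le> n \<Longrightarrow> card (insert 0 {11..<n}) = n - 10"
  by simp

lemma inj_clique:
  assumes "\<forall>i\<in>K. \<forall>j\<in>K. i \<noteq> j \<longrightarrow> E i j" "\<And>i j. i \<in> K \<Longrightarrow> j \<in> K \<Longrightarrow> E i j \<Longrightarrow> c i \<noteq> c j"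
  shows "inj_on c K"
  using assms unfolding inj_on_def by blast

lemma omega_gr:
  assumes esok: "es_ok es" and cc: "col_chk es cl" and n: "14 \<le> n"
  shows "clique_number n (gr es n) = n - 10"
proof -
  let ?A = "{card S | S. S \<subseteq> {0..<n} \<and> (\<forall>i\<in>S. \<forall>j\<in>S. i \<noteq> j \<longrightarrow> gr es n i j)}"
  have fin: "finite ?A"
  proof (rule finite_subset)
    show "?A \<subseteq> card ` Pow {0..<n}" by blast
  qed simp
  have ub: "card S \<le> n - 10" if S: "S \<subseteq> {0..<n}" "\<forall>i\<in>S. \<forall>j\<in>S. i \<noteq> j \<longrightarrow> gr es n i j" for S
  proof -
    have inj: "inj_on (colf cl) S"
      by (rule inj_clique[OF S(2)]) (use colf_ok(2)[OF esok cc n] in blast)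
    have "colf cl ` S \<subseteq> {..<n - 10}" using S(1) colf_ok(1)[OF esok cc n] by auto
    then have "card (colf cl ` S) \<le> card {..<n - 10}" by (meson card_mono finite_lessThan)
    then have "card (colf cl ` S) \<le> n - 10" by simp
    then show ?thesis using card_image[OF inj] by simp
  qed
  have wit: "n - 10 \<in> ?A"
    using clique_K0[of n es] card_K0[OF n] n by (intro CollectI exI[of _ "insert 0 {11..<n}"]) auto
  show ?thesis unfolding clique_number_def
    by (rule Max_eqI[OF fin]) (use ub wit in auto)
qed

lemma chi_gr:
  assumes esok: "es_ok es" and cc: "col_chk es cl" and n: "14 \<le> n"
  shows "chromatic_number n (gr es n) = n - 10"
  unfolding chromatic_number_def
proof (rule Least_equality)
  show "\<exists>c. (\<forall>i<n. c i < n - 10) \<and> (\<forall>i<n. \<forall>j<n. gr es n i j \<longrightarrow> c i \<noteq> c j)"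
    using colf_ok[OF esok cc n] by blast
next
  fix k :: nat assume "\<exists>c. (\<forall>i<n. c i < k) \<and> (\<forall>i<n. \<forall>j<n. gr es n i j \<longrightarrow> c i \<noteq> c j)"
  then obtain c where c: "\<forall>i<n. c i < k" "\<forall>i<n. \<forall>j<n. gr es n i j \<longrightarrow> c i \<noteq> c j" by blast
  let ?K = "insert 0 {11..<n}"
  have Kn: "\<And>i. i \<in> ?K \<Longrightarrow> i < n" using n by auto
  have inj: "inj_on c ?K"
    by (rule inj_clique[OF clique_K0]) (use c(2) Kn in blast)
  have "c ` ?K \<subseteq> {..<k}" using c(1) Kn by auto
  then have "card (c ` ?K) \<le> card {..<k}" by (meson card_mono finite_lessThan)
  then have "card (c ` ?K) \<le> k" by simp
  then show "n - 10 \<le> k" using card_image[OF inj] card_K0[OF n] by simp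
qed



definition SS :: "nat set" where "SS = {1,2,3,4}"

definition Qm :: "nat \<Rightarrow> real mat" where
  "Qm n = mat n n (\<lambda>(i,j). (if i = j then 1 else 0) - (if i = j \<and> i \<in> SS then 2 else 0)
      + (if i \<in> SS \<and> j \<in> SS then 1/2 else 0))"

lemma Qm_carrier: "Qm n \<in> carrier_mat n n" unfolding Qm_def by simp

lemma Qm_dims[simp]: "dim_row (Qm n) = n" "dim_col (Qm n) = n" unfolding Qm_def by simp_all

lemma Qm_idx: "i < n \<Longrightarrow> j < n \<Longrightarrow> Qm n $$ (i,j) = (if i = j then 1 else 0) - (if i = j \<and> i \<in> SS then 2 else 0)
      + (if i \<in> SS \<and> j \<in> SS then 1/2 else 0)"
  unfolding Qm_def by simp

lemma sum_SS: assumes "5 \<le> n"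
  shows "(\<Sum>k<n. (if k \<in> SS then f k else (0::real))) = f 1 + f 2 + f 3 + f 4"
proof -
  have "(\<Sum>k<n. (if k \<in> SS then f k else (0::real))) = sum f {k\<in>{..<n}. k \<in> SS}"
    by (rule sum.inter_filter[symmetric]) simp
  also have "{k\<in>{..<n}. k \<in> SS} = {1,2,3,4}" using assms unfolding SS_def by auto
  finally show ?thesis by simp
qed

lemma Q_left:
  assumes A: "A \<in> carrier_mat n n" and n: "5 \<le> n" and ij: "i < n" "j < n"
  shows "(Qm n * A) $$ (i,j) = A$$(i,j) - (if i \<in> SS then 2 * A$$(i,j) else 0)
     + (if i \<in> SS then (A$$(1,j) + A$$(2,j) + A$$(3,j) + A$$(4,j)) / 2 else 0)"
proof -
  have "(Qm n * A) $$ (i,j) = (\<Sum>k<n. Qm n $$ (i,k) * A $$ (k,j))"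
    using A ij Qm_carrier[of n] by (simp add: scalar_prod_def atLeast0LessThan)
  also have "\<dots> = (\<Sum>k<n. (if k = i then A$$(i,j) else 0) - (if k = i then (if i \<in> SS then 2 * A$$(i,j) else 0) else 0)
      + (if k \<in> SS then (if i \<in> SS then A$$(k,j) / 2 else 0) else 0))"
    by (intro sum.cong refl) (auto simp: Qm_idx ij)
  also have "\<dots> = A$$(i,j) - (if i \<in> SS then 2 * A$$(i,j) else 0)
     + (if i \<in> SS then (A$$(1,j) + A$$(2,j) + A$$(3,j) + A$$(4,j)) / 2 else 0)"
    using ij by (simp add: sum.distrib sum_subtractf sum_SS[OF n] add_divide_distrib)
  finally show ?thesis .
qed

lemma Q_right:
  assumes A: "A \<in> carrier_mat n n" and n: "5 \<le> n" and ij: "i < n" "j < n"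
  shows "(A * Qm n) $$ (i,j) = A$$(i,j) - (if j \<in> SS then 2 * A$$(i,j) else 0)
     + (if j \<in> SS then (A$$(i,1) + A$$(i,2) + A$$(i,3) + A$$(i,4)) / 2 else 0)"
proof -
  have "(A * Qm n) $$ (i,j) = (\<Sum>k<n. A $$ (i,k) * Qm n $$ (k,j))"
    using A ij Qm_carrier[of n] by (simp add: scalar_prod_def atLeast0LessThan)
  also have "\<dots> = (\<Sum>k<n. (if k = j then A$$(i,j) else 0) - (if k = j then (if j \<in> SS then 2 * A$$(i,j) else 0) else 0)
      + (if k \<in> SS then (if j \<in> SS then A$$(i,k) / 2 else 0) else 0))"
    by (intro sum.cong refl) (auto simp: Qm_idx ij)
  also have "\<dots> = A$$(i,j) - (if j \<in> SS then 2 * A$$(i,j) else 0)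
     + (if j \<in> SS then (A$$(i,1) + A$$(i,2) + A$$(i,3) + A$$(i,4)) / 2 else 0)"
    using ij by (simp add: sum.distrib sum_subtractf sum_SS[OF n] add_divide_distrib)
  finally show ?thesis .
qed

lemma QQ: assumes n: "5 \<le> n" shows "Qm n * Qm n = 1\<^sub>m n"
proof (rule eq_matI)
  fix i j assume ij: "i < dim_row (1\<^sub>m n)" "j < dim_col (1\<^sub>m n)"
  then have ij': "i < n" "j < n" by auto
  have q: "\<And>k. k \<in> SS \<Longrightarrow> k < n" using n unfolding SS_def by auto
  show "(Qm n * Qm n) $$ (i,j) = 1\<^sub>m n $$ (i,j)"
    unfolding Q_left[OF Qm_carrier n ij'] using ij' q[of 1] q[of 2] q[of 3] q[of 4]
    by (auto simp: Qm_idx SS_def)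
qed (auto simp: Qm_carrier)

lemma Q_diag_comm:
  assumes M: "M \<in> carrier_mat n n" and n: "5 \<le> n"
    and off: "\<And>i j. i < n \<Longrightarrow> j < n \<Longrightarrow> i \<noteq> j \<Longrightarrow> M $$ (i,j) = 0"
    and c: "M$$(1,1) = M$$(2,2)" "M$$(1,1) = M$$(3,3)" "M$$(1,1) = M$$(4,4)"
  shows "Qm n * M = M * Qm n"
proof (rule eq_matI)
  fix i j assume ij: "i < dim_row (M * Qm n)" "j < dim_col (M * Qm n)"
  then have ij': "i < n" "j < n" using M Qm_carrier[of n] by auto
  have q: "1 < n" "2 < n" "3 < n" "4 < n" using n by auto
  have o: "\<And>a b. a < n \<Longrightarrow> b < n \<Longrightarrow> a \<noteq> b \<Longrightarrow> M $$ (a,b) = 0" by (rule off)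
  show "(Qm n * M) $$ (i,j) = (M * Qm n) $$ (i,j)"
    unfolding Q_left[OF M n ij'] Q_right[OF M n ij']
    using ij' q c o[OF ij'] o[OF q(1) ij'(2)] o[OF q(2) ij'(2)] o[OF q(3) ij'(2)] o[OF q(4) ij'(2)]
      o[OF ij'(1) q(1)] o[OF ij'(1) q(2)] o[OF ij'(1) q(3)] o[OF ij'(1) q(4)]
    by (auto simp: SS_def)
qed (use M Qm_carrier[of n] in auto)



definition ind :: "(nat \<times> nat) list \<Rightarrow> nat \<Rightarrow> nat \<Rightarrow> int" where
  "ind es i j = (if gr es 11 i j then 1 else 0)"

definition inS :: "nat \<Rightarrow> bool" where "inS i = (1 \<le> i \<and> i \<le> 4)"

definition swL :: "(nat \<times> nat) list \<Rightarrow> nat \<Rightarrow> nat \<Rightarrow> int" where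
  "swL es i j = 2 * ind es i j - (if inS i then 4 * ind es i j else 0)
     + (if inS i then ind es 1 j + ind es 2 j + ind es 3 j + ind es 4 j else 0)"

definition swR :: "(nat \<times> nat) list \<Rightarrow> nat \<Rightarrow> nat \<Rightarrow> int" where
  "swR es i j = 2 * ind es i j - (if inS j then 4 * ind es i j else 0)
     + (if inS j then ind es i 1 + ind es i 2 + ind es i 3 + ind es i 4 else 0)"

definition sw_chk :: "(nat \<times> nat) list \<Rightarrow> (nat \<times> nat) list \<Rightarrow> bool" where
  "sw_chk esX esY = list_all (\<lambda>i. list_all (\<lambda>j. swL esX i j = swR esY i j) [0..<11]) [0..<11]"

definition dg :: "(nat \<times> nat) list \<Rightarrow> nat \<Rightarrow> nat" where
  "dg es i = length (filter (gr es 11 i) [0..<11])"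

definition deg_chk :: "(nat \<times> nat) list \<Rightarrow> (nat \<times> nat) list \<Rightarrow> bool" where
  "deg_chk esX esY = (list_all (\<lambda>i. dg esX i = dg esY i) [1..<11] \<and> dg esX 1 = dg esX 2 \<and> dg esX 1 = dg esX 3 \<and> dg esX 1 = dg esX 4)"

lemma SS_inS: "(i \<in> SS) = inS i" unfolding SS_def inS_def by auto

lemma gr_restrict: "i < 11 \<Longrightarrow> j < 11 \<Longrightarrow> 11 \<le> n \<Longrightarrow> gr es n i j = gr es 11 i j"
  unfolding gr_def by auto

lemma no_cross: "11 \<le> i \<Longrightarrow> 1 \<le> j \<Longrightarrow> j < 11 \<Longrightarrow> \<not> gr es n i j"
  "11 \<le> i \<Longrightarrow> 1 \<le> j \<Longrightarrow> j < 11 \<Longrightarrow> \<not> gr es n j i"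
  unfolding gr_def by auto

lemma adj_idx: "i < n \<Longrightarrow> j < n \<Longrightarrow> graph_adj_mat n E $$ (i,j) = (if E i j then 1 else 0)"
  unfolding graph_adj_mat_def by simp

lemma adj_carrier: "graph_adj_mat n E \<in> carrier_mat n n"
  unfolding graph_adj_mat_def by simp

lemma adj_dims[simp]: "dim_row (graph_adj_mat n E) = n" "dim_col (graph_adj_mat n E) = n"
  unfolding graph_adj_mat_def by simp_all

lemma case1:
  assumes sw: "sw_chk esX esY" and n: "11 \<le> n" and ij: "i < 11" "j < 11" "i < n" "j < n"
  shows "graph_adj_mat n (gr esX n) $$ (i,j) - (if i \<in> SS then 2 * graph_adj_mat n (gr esX n) $$ (i,j) else 0)
       + (if i \<in> SS then (graph_adj_mat n (gr esX n) $$ (1,j) + graph_adj_mat n (gr esX n) $$ (2,j) + graph_adj_mat n (gr esX n) $$ (3,j) + graph_adj_mat n (gr esX n) $$ (4,j)) / 2 else 0) =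
       graph_adj_mat n (gr esY n) $$ (i,j) - (if j \<in> SS then 2 * graph_adj_mat n (gr esY n) $$ (i,j) else 0)
       + (if j \<in> SS then (graph_adj_mat n (gr esY n) $$ (i,1) + graph_adj_mat n (gr esY n) $$ (i,2) + graph_adj_mat n (gr esY n) $$ (i,3) + graph_adj_mat n (gr esY n) $$ (i,4)) / 2 else 0)" (is "?L = ?R")
proof -
  have e: "swL esX i j = swR esY i j" using sw ij unfolding sw_chk_def list_all_iff by auto
  have r: "graph_adj_mat n (gr es n) $$ (a,b) = real_of_int (ind es a b)" if "a < 11" "b < 11" for es a b
  proof -
    have "gr es n a b = gr es 11 a b" by (rule gr_restrict[OF that n])
    then show ?thesis using that n by (simp add: adj_idx ind_def)
  qed
  have e2: "real_of_int (swL esX i j) = real_of_int (swR esY i j)" using e by simp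
  have l: "real_of_int (swL esX i j) = 2 * (real_of_int (ind esX i j) - (if inS i then 2 * real_of_int (ind esX i j) else 0)
       + (if inS i then (real_of_int (ind esX 1 j) + real_of_int (ind esX 2 j) + real_of_int (ind esX 3 j) + real_of_int (ind esX 4 j)) / 2 else 0))"
    unfolding swL_def by (cases "inS i") simp_all
  have rr: "real_of_int (swR esY i j) = 2 * (real_of_int (ind esY i j) - (if inS j then 2 * real_of_int (ind esY i j) else 0)
       + (if inS j then (real_of_int (ind esY i 1) + real_of_int (ind esY i 2) + real_of_int (ind esY i 3) + real_of_int (ind esY i 4)) / 2 else 0))"
    unfolding swR_def by (cases "inS j") simp_all
  have L: "?L = real_of_int (swL esX i j) / 2" unfolding l SS_inS using ij by (simp add: r)
  have R: "?R = real_of_int (swR esY i j) / 2" unfolding rr SS_inS using ij by (simp add: r)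
  show ?thesis unfolding L R e2 ..
qed

lemma adj_switch:
  assumes sw: "sw_chk esX esY" and n: "11 \<le> n"
  shows "Qm n * graph_adj_mat n (gr esX n) = graph_adj_mat n (gr esY n) * Qm n"
proof (rule eq_matI)
  let ?AX = "graph_adj_mat n (gr esX n)" and ?AY = "graph_adj_mat n (gr esY n)"
  have n5: "5 \<le> n" using n by simp
  fix i j assume "i < dim_row (?AY * Qm n)" "j < dim_col (?AY * Qm n)"
  then have ij: "i < n" "j < n" by auto
  have k: "1 < n" "2 < n" "3 < n" "4 < n" using n by auto
  show "(Qm n * ?AX) $$ (i,j) = (?AY * Qm n) $$ (i,j)"
    unfolding Q_left[OF adj_carrier n5 ij] Q_right[OF adj_carrier n5 ij]
  proof -
    consider "i < 11" "j < 11" | "11 \<le> i" | "i < 11" "11 \<le> j" by linarith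
    then show "?AX $$ (i,j) - (if i \<in> SS then 2 * ?AX $$ (i,j) else 0)
       + (if i \<in> SS then (?AX $$ (1,j) + ?AX $$ (2,j) + ?AX $$ (3,j) + ?AX $$ (4,j)) / 2 else 0) =
       ?AY $$ (i,j) - (if j \<in> SS then 2 * ?AY $$ (i,j) else 0)
       + (if j \<in> SS then (?AY $$ (i,1) + ?AY $$ (i,2) + ?AY $$ (i,3) + ?AY $$ (i,4)) / 2 else 0)"
    proof cases
      case 1
      show ?thesis using case1[OF sw n 1 ij] .
    next
      case 2
      have iS: "i \<notin> SS" using 2 unfolding SS_def by auto
      have y0: "\<And>k. 1 \<le> k \<Longrightarrow> k < 11 \<Longrightarrow> ?AY $$ (i,k) = 0" using ij 2 n by (simp add: adj_idx no_cross)
      show ?thesis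
      proof (cases "j \<in> SS")
        case True
        then have j: "1 \<le> j" "j < 11" unfolding SS_def by auto
        have "?AX $$ (i,j) = 0" using ij 2 j by (simp add: adj_idx no_cross)
        then show ?thesis using iS True y0 j by simp
      next
        case False
        have "?AX $$ (i,j) = ?AY $$ (i,j)" using ij 2 by (simp add: adj_idx gr_indep_es(1)[of i esX n j esY])
        then show ?thesis using iS False by simp
      qed
    next
      case 3
      have jS: "j \<notin> SS" using 3 unfolding SS_def by auto
      have x0: "\<And>k. 1 \<le> k \<Longrightarrow> k < 11 \<Longrightarrow> ?AX $$ (k,j) = 0" using ij 3 n by (simp add: adj_idx no_cross)
      show ?thesis
      proof (cases "i \<in> SS")
        case True
        then have i: "1 \<le> i" "i < 11" unfolding SS_def by auto
        have "?AY $$ (i,j) = 0" using ij 3 i by (simp add: adj_idx no_cross)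
        moreover have "?AX $$ (i,j) = 0" using x0 i by simp
        ultimately show ?thesis using jS True x0 by simp
      next
        case False
        have "?AX $$ (i,j) = ?AY $$ (i,j)" using ij 3 by (simp add: adj_idx gr_indep_es(2)[of j esX n i esY])
        then show ?thesis using jS False by simp
      qed
    qed
  qed
qed (use adj_carrier Qm_carrier in auto)



lemma deg_eq:
  assumes ox: "es_ok esX" and oy: "es_ok esY" and dc: "deg_chk esX esY" and n: "11 \<le> n"
  shows "degree n (gr esX n) i = degree n (gr esY n) i"
proof (cases "1 \<le> i \<and> i < 11")
  case True
  have "dg esX i = dg esY i" using dc True unfolding deg_chk_def list_all_iff by auto
  then show ?thesis using deg_core[OF ox _ _ n, of i] deg_core[OF oy _ _ n, of i] True unfolding dg_def by simp
next
  case False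
  have "{j. j < n \<and> gr esX n i j} = {j. j < n \<and> gr esY n i j}"
    using gr_indep_es(1)[OF False, of esX n _ esY] by auto
  then show ?thesis unfolding degree_def by simp
qed

lemma deg_S:
  assumes ox: "es_ok esX" and dc: "deg_chk esX esY" and n: "11 \<le> n"
  shows "degree n (gr esX n) 1 = degree n (gr esX n) 2" "degree n (gr esX n) 1 = degree n (gr esX n) 3"
    "degree n (gr esX n) 1 = degree n (gr esX n) 4"
  using dc deg_core[OF ox _ _ n, of 1] deg_core[OF ox _ _ n, of 2] deg_core[OF ox _ _ n, of 3]
    deg_core[OF ox _ _ n, of 4] unfolding deg_chk_def dg_def by auto

lemma deg_mat_carrier: "deg_mat n E \<in> carrier_mat n n" unfolding deg_mat_def by simp
lemma dis_carrier: "deg_inv_sqrt_mat n E \<in> carrier_mat n n" unfolding deg_inv_sqrt_mat_def by simp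

lemma cospec_sim:
  assumes A: "A \<in> carrier_mat n n" and B: "B \<in> carrier_mat n n" and Q: "Q \<in> carrier_mat n n"
    and QQ: "Q * Q = 1\<^sub>m n" and BA: "B = Q * A * Q"
  shows "cospectral A B"
proof -
  have "similar_mat B A" by (rule similar_matI[of B A Q Q n]) (use A B Q QQ BA in auto)
  then have cp: "char_poly B = char_poly A" by (rule char_poly_similar)
  have "char_poly (map_mat complex_of_real A) = map_poly complex_of_real (char_poly A)"
    by (rule of_real_hom.char_poly_hom[OF A])
  moreover have "char_poly (map_mat complex_of_real B) = map_poly complex_of_real (char_poly B)"
    by (rule of_real_hom.char_poly_hom[OF B])
  ultimately show ?thesis unfolding cospectral_def spectrum_mset_def using cp by simp
qed

lemma conj_comm:
  fixes Q M A :: "real mat"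
  assumes Q: "Q \<in> carrier_mat n n" and M: "M \<in> carrier_mat n n" and A: "A \<in> carrier_mat n n"
    and c: "Q * M = M * Q"
  shows "Q * (M * A * M) * Q = M * (Q * A * Q) * M"
proof -
  have "Q * (M * A * M) * Q = (Q * M) * A * (M * Q)"
    using Q M A by (simp add: assoc_mult_mat[of _ n n _ n _ n])
  also have "\<dots> = (M * Q) * A * (Q * M)" using c by simp
  also have "\<dots> = M * (Q * A * Q) * M"
    using Q M A by (simp add: assoc_mult_mat[of _ n n _ n _ n])
  finally show ?thesis .
qed

lemma cospectral_all:
  assumes ox: "es_ok esX" and oy: "es_ok esY" and sw: "sw_chk esX esY" and dc: "deg_chk esX esY"
    and n: "11 \<le> n"
  shows "cospectral (graph_adj_mat n (gr esX n)) (graph_adj_mat n (gr esY n))"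
    and "cospectral (laplacian n (gr esX n)) (laplacian n (gr esY n))"
    and "cospectral (signless_laplacian n (gr esX n)) (signless_laplacian n (gr esY n))"
    and "cospectral (normalized_laplacian n (gr esX n)) (normalized_laplacian n (gr esY n))"
proof -
  have n5: "5 \<le> n" using n by simp
  define Q where "Q = Qm n"
  define AX where "AX = graph_adj_mat n (gr esX n)"
  define AY where "AY = graph_adj_mat n (gr esY n)"
  define D where "D = deg_mat n (gr esX n)"
  define Ds where "Ds = deg_inv_sqrt_mat n (gr esX n)"
  have Qc: "Q \<in> carrier_mat n n" unfolding Q_def by (rule Qm_carrier)
  have AXc: "AX \<in> carrier_mat n n" unfolding AX_def by (rule adj_carrier)
  have AYc: "AY \<in> carrier_mat n n" unfolding AY_def by (rule adj_carrier)
  have Dc: "D \<in> carrier_mat n n" unfolding D_def by (rule deg_mat_carrier)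
  have Dsc: "Ds \<in> carrier_mat n n" unfolding Ds_def by (rule dis_carrier)
  have QQ': "Q * Q = 1\<^sub>m n" unfolding Q_def by (rule QQ[OF n5])
  have degeq: "\<And>i. degree n (gr esX n) i = degree n (gr esY n) i" by (rule deg_eq[OF ox oy dc n])
  have DY: "deg_mat n (gr esY n) = D" unfolding D_def deg_mat_def degeq ..
  have DsY: "deg_inv_sqrt_mat n (gr esY n) = Ds" unfolding Ds_def deg_inv_sqrt_mat_def degeq ..
  have dS: "degree n (gr esX n) 1 = degree n (gr esX n) 2" "degree n (gr esX n) 1 = degree n (gr esX n) 3"
    "degree n (gr esX n) 1 = degree n (gr esX n) 4" by (rule deg_S[OF ox dc n])+
  have q: "1 < n" "2 < n" "3 < n" "4 < n" using n by auto
  have QD: "Q * D = D * Q" unfolding Q_def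
    by (rule Q_diag_comm[OF Dc n5]) (use q dS in \<open>auto simp: D_def deg_mat_def\<close>)
  have QDs: "Q * Ds = Ds * Q" unfolding Q_def
    by (rule Q_diag_comm[OF Dsc n5]) (use q dS in \<open>auto simp: Ds_def deg_inv_sqrt_mat_def\<close>)
  have QA: "Q * AX = AY * Q" unfolding Q_def AX_def AY_def by (rule adj_switch[OF sw n])
  have hA: "AY = Q * AX * Q"
  proof -
    have "Q * AX * Q = AY * Q * Q" using QA by simp
    also have "\<dots> = AY * (Q * Q)" using AYc Qc by (simp add: assoc_mult_mat[of _ n n _ n _ n])
    also have "\<dots> = AY" using QQ' AYc by simp
    finally show ?thesis by simp
  qed
  have hD: "Q * D * Q = D"
  proof -
    have "Q * D * Q = D * Q * Q" using QD by simp
    also have "\<dots> = D * (Q * Q)" using Dc Qc by (simp add: assoc_mult_mat[of _ n n _ n _ n])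
    also have "\<dots> = D" using QQ' Dc by simp
    finally show ?thesis .
  qed
  show "cospectral (graph_adj_mat n (gr esX n)) (graph_adj_mat n (gr esY n))"
    using cospec_sim[OF AXc AYc Qc QQ' hA] unfolding AX_def AY_def .
  have LY: "laplacian n (gr esY n) = Q * (D - AX) * Q"
  proof -
    have "Q * (D - AX) * Q = (Q * D - Q * AX) * Q" using Qc Dc AXc by (simp add: mult_minus_distrib_mat)
    also have "\<dots> = Q * D * Q - Q * AX * Q"
      using Qc Dc AXc by (intro minus_mult_distrib_mat) auto
    also have "\<dots> = D - AY" using hD hA by simp
    finally show ?thesis unfolding laplacian_def DY AY_def by simp
  qed
  have cL: "D - AX \<in> carrier_mat n n" using Dc AXc by (simp add: minus_carrier_mat)
  have "cospectral (D - AX) (Q * (D - AX) * Q)"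
    by (rule cospec_sim[OF cL _ Qc QQ' refl]) (use cL Qc in simp)
  then show "cospectral (laplacian n (gr esX n)) (laplacian n (gr esY n))"
    unfolding LY unfolding laplacian_def D_def AX_def .
  have SY: "signless_laplacian n (gr esY n) = Q * (D + AX) * Q"
  proof -
    have "Q * (D + AX) * Q = (Q * D + Q * AX) * Q" using Qc Dc AXc by (simp add: mult_add_distrib_mat)
    also have "\<dots> = Q * D * Q + Q * AX * Q"
      using Qc Dc AXc by (intro add_mult_distrib_mat) auto
    also have "\<dots> = D + AY" using hD hA by simp
    finally show ?thesis unfolding signless_laplacian_def DY AY_def by simp
  qed
  have cS: "D + AX \<in> carrier_mat n n" using Dc AXc by simp
  have "cospectral (D + AX) (Q * (D + AX) * Q)"
    by (rule cospec_sim[OF cS _ Qc QQ' refl]) (use cS Qc in simp)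
  then show "cospectral (signless_laplacian n (gr esX n)) (signless_laplacian n (gr esY n))"
    unfolding SY unfolding signless_laplacian_def D_def AX_def .
  have NY: "normalized_laplacian n (gr esY n) = Q * (1\<^sub>m n - Ds * AX * Ds) * Q"
  proof -
    have c1: "Ds * AX * Ds \<in> carrier_mat n n" using Dsc AXc by simp
    have "Q * (1\<^sub>m n - Ds * AX * Ds) = Q * 1\<^sub>m n - Q * (Ds * AX * Ds)"
      using Qc c1 by (intro mult_minus_distrib_mat) auto
    then have "Q * (1\<^sub>m n - Ds * AX * Ds) * Q = (Q * 1\<^sub>m n - Q * (Ds * AX * Ds)) * Q" by simp
    also have "\<dots> = Q * 1\<^sub>m n * Q - Q * (Ds * AX * Ds) * Q"
      using Qc c1 by (intro minus_mult_distrib_mat) auto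
    also have "Q * 1\<^sub>m n * Q = 1\<^sub>m n" using Qc QQ' by simp
    also have "Q * (Ds * AX * Ds) * Q = Ds * (Q * AX * Q) * Ds" by (rule conj_comm[OF Qc Dsc AXc QDs])
    also have "\<dots> = Ds * AY * Ds" using hA by simp
    finally show ?thesis unfolding normalized_laplacian_def DsY AY_def by simp
  qed
  have cN: "1\<^sub>m n - Ds * AX * Ds \<in> carrier_mat n n" using Dsc AXc by (simp add: minus_carrier_mat)
  have "cospectral (1\<^sub>m n - Ds * AX * Ds) (Q * (1\<^sub>m n - Ds * AX * Ds) * Q)"
    by (rule cospec_sim[OF cN _ Qc QQ' refl]) (use cN Qc in simp)
  then show "cospectral (normalized_laplacian n (gr esX n)) (normalized_laplacian n (gr esY n))"
    unfolding NY unfolding normalized_laplacian_def Ds_def AX_def .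
qed



definition edgesX :: "(nat \<times> nat) list" where "edgesX = [(1,6), (1,7), (1,8), (2,6), (2,9), (2,10), (3,5), (3,7), (3,10), (4,5), (4,8), (4,9), (5,7), (5,8), (7,9)]"

definition MpX :: "int list list" where "MpX = [[0, 0, 0, 0, 0, 0, 0, 0, 0, 0, 0, 0], [0, 7146, 5263, 6733, 5437, 1344, 0, 0, 0, 3649, 187, 7137], [0, 5263, 6099, 5242, 6507, (-436), 0, 2787, (-64), 0, 0, 6090], [0, 6733, 5242, 7631, 5053, 0, 785, 0, 2132, 4207, 0, 7621], [0, 5437, 6507, 5053, 7197, 0, 815, 3864, 0, 0, 1100, 7187], [0, 1344, (-436), 0, 0, 2754, 1935, 0, 0, 2961, 2894, 2745], [0, 0, 0, 785, 815, 1935, 11890, 6246, 9366, 7222, 11281, 11881], [0, 0, 2787, 0, 3864, 0, 6246, 7298, 3864, 0, 6338, 7289], [0, 0, (-64), 2132, 0, 0, 9366, 3864, 9351, 6573, 7733, 9342], [0, 3649, 0, 4207, 0, 2961, 7222, 0, 6573, 9873, 6645, 9864], [0, 187, 0, 0, 1100, 2894, 11281, 6338, 7733, 6645, 11425, 11416], [0, 7137, 6090, 7621, 7187, 2745, 11881, 7289, 9342, 9864, 11416, 19336]]"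

definition VpX :: "int list list" where "VpX = [[0, 253531, 186829, 239012, 193006, 47710, 0, 0, 0, 129534, 6638, 253354], [0, 0, 141244, 17866, 159326, (-90890), 0, 177587, (-4078), (-171341), (-8781), 52931], [0, 0, 0, 105815, (-33080), (-92420), 66767, (-29985), 182023, 94163, (-13512), 66991], [0, 0, 0, 0, 31725, 69837, 300828, 173047, 210281, 170628, 301683, 301565], [0, 0, 0, 0, 0, 28178, 91439, 45587, 62687, 59692, 92757, 90820], [0, 0, 0, 0, 0, 0, 60478, 32909, 52091, 31798, 52828, 56759], [0, 0, 0, 0, 0, 0, 0, 10170, (-228), (-4221), 2351, 1676], [0, 0, 0, 0, 0, 0, 0, 0, 10608, 3695, 1551, 3498], [0, 0, 0, 0, 0, 0, 0, 0, 0, 9879, 2515, 3211], [0, 0, 0, 0, 0, 0, 0, 0, 0, 0, 7985, 1897], [0, 0, 0, 0, 0, 0, 0, 0, 0, 0, 0, 8390]]"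

definition apX :: int where "apX = 9000000"

definition MdX :: "int list list" where "MdX = [[0, 0, 0, 0, 0, 0, 0, 0, 0, 0, 0], [0, 316905, (-100000), (-100000), (-100000), (-100000), 201765, 25143, (-37420), (-100000), (-100000)], [0, (-100000), 316905, (-100000), (-100000), (-100000), 56094, (-100000), (-100000), 106710, 42331], [0, (-100000), (-100000), 316905, (-100000), (-19403), (-100000), 39527, (-100000), (-100000), 218995], [0, (-100000), (-100000), (-100000), 316905, 244295, (-100000), (-100000), 269540, (-32710), (-100000)], [0, (-100000), (-100000), (-19403), 244295, 316905, (-100000), (-70371), 286237, (-100000), (-100000)], [0, 201765, 56094, (-100000), (-100000), (-100000), 316905, (-100000), (-100000), (-100000), (-100000)], [0, 25143, (-100000), 39527, (-100000), (-70371), (-100000), 316905, (-100000), 202184, (-100000)], [0, (-37420), (-100000), (-100000), 269540, 286237, (-100000), (-100000), 316905, (-100000), (-100000)], [0, (-100000), 106710, (-100000), (-32710), (-100000), (-100000), 202184, (-100000), 316905, (-100000)], [0, (-100000), 42331, 218995, (-100000), (-100000), (-100000), (-100000), (-100000), (-100000), 316905]]"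

definition VdX :: "int list list" where "VdX = [[0, 1688802, (-532922), (-532922), (-532922), (-532922), 1075251, 133993, (-199420), (-532922), (-532922)], [0, 0, 1602512, (-738844), (-738844), (-738844), 672613, (-517058), (-627936), 422077, 60513], [0, 0, 0, 1422025, (-1216502), (-706403), 119535, 31733, (-1033893), (-613320), 1217741], [0, 0, 0, 0, 736395, 691772, 428296, (-1591557), 811935, (-1375149), 464545], [0, 0, 0, 0, 0, 1022057, (-40959), 175582, 698485, (-346477), (-587481)], [0, 0, 0, 0, 0, 0, 1021800, (-10999), (-448982), 36429, (-720557)], [0, 0, 0, 0, 0, 0, 0, 41678, (-11710), 32926, (-32894)], [0, 0, 0, 0, 0, 0, 0, 0, 14218, (-4420), 107], [0, 0, 0, 0, 0, 0, 0, 0, 0, 14899, (-5287)], [0, 0, 0, 0, 0, 0, 0, 0, 0, 0, 15521]]"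

definition adX :: int where "adX = 9000000"

definition udX :: int where "udX = 316905"

definition edgesY :: "(nat \<times> nat) list" where "edgesY = [(1,5), (1,9), (1,10), (2,5), (2,7), (2,8), (3,6), (3,8), (3,9), (4,6), (4,7), (4,10), (5,7), (5,8), (7,9)]"

definition MpY :: "int list list" where "MpY = [[0, 0, 0, 0, 0, 0, 0, 0, 0, 0, 0, 0], [0, 8401, 5846, 7111, 5643, 0, 1555, 4647, 1719, 0, 0, 8392], [0, 5846, 8401, 5643, 7111, 0, 1555, 0, 0, 4647, 1718, 8392], [0, 7111, 5643, 6303, 5448, 0, 0, 2678, 0, 0, (-990), 6294], [0, 5643, 7111, 5448, 6303, 0, 0, 0, (-990), 2678, 0, 6294], [0, 0, 0, 0, 0, 9, 0, 0, 0, 0, 0, 0], [0, 1555, 1555, 0, 0, 0, 12622, 7044, 11329, 7044, 11329, 12612], [0, 4647, 0, 2678, 0, 0, 7044, 8489, 7783, 0, 4647, 8480], [0, 1719, 0, 0, (-990), 0, 11329, 7783, 10807, 4647, 9638, 10798], [0, 0, 4647, 0, 2678, 0, 7044, 0, 4647, 8489, 7783, 8480], [0, 0, 1718, (-990), 0, 0, 11329, 4647, 9638, 7783, 10807, 10798], [0, 8392, 8392, 6294, 6294, 0, 12612, 8480, 10798, 8480, 10798, 19369]]"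

definition VpY :: "int list list" where "VpY = [[0, 274905, 191389, 232804, 184744, 0, 50908, 152136, 56278, 0, 0, 274742], [0, 0, 197340, 31574, 145136, 0, 21545, (-147549), (-54581), 211934, 78352, 116273], [0, 0, 0, 38684, 37237, 0, (-323956), (-172090), (-294134), (-172981), (-294278), (-283996)], [0, 0, 0, 0, 10480, 0, (-44719), (-27044), (-41273), (-20589), (-39457), (-39203)], [0, 0, 0, 0, 0, 6705, 0, 0, 0, 0, 0, 0], [0, 0, 0, 0, 0, 0, 59658, 31365, 52633, 31365, 53226, 54662], [0, 0, 0, 0, 0, 0, 0, 10911, 4355, (-3496), 463, 2787], [0, 0, 0, 0, 0, 0, 0, 0, 8571, 2998, 3430, 3090], [0, 0, 0, 0, 0, 0, 0, 0, 0, 9892, 4716, 3122], [0, 0, 0, 0, 0, 0, 0, 0, 0, 0, 8010, 1879], [0, 0, 0, 0, 0, 0, 0, 0, 0, 0, 0, 8565]]"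

definition apY :: int where "apY = 9000000"

definition MdY :: "int list list" where "MdY = [[0, 0, 0, 0, 0, 0, 0, 0, 0, 0, 0], [0, 316045, (-100000), (-100000), (-100000), (-73256), (-100000), (-100000), (-100000), 1036, 243202], [0, (-100000), 316045, (-100000), (-100000), 297394, (-100000), 1037, 243201, (-100000), (-100000)], [0, (-100000), (-100000), 316045, (-100000), (-100000), 122996, (-100000), 8291, 71440, (-100000)], [0, (-100000), (-100000), (-100000), 316045, (-100000), 122997, 71439, (-100000), (-100000), 8291], [0, (-73256), 297394, (-100000), (-100000), 316045, (-100000), (-30715), 261831, (-100000), (-100000)], [0, (-100000), (-100000), 122996, 122997, (-100000), 316045, (-100000), (-100000), (-100000), (-100000)], [0, (-100000), 1037, (-100000), 71439, (-30715), (-100000), 316045, (-100000), 206516, (-100000)], [0, (-100000), 243201, 8291, (-100000), 261831, (-100000), (-100000), 316045, (-100000), (-100000)], [0, 1036, (-100000), 71440, (-100000), (-100000), (-100000), 206516, (-100000), 316045, (-100000)], [0, 243202, (-100000), (-100000), 8291, (-100000), (-100000), (-100000), (-100000), (-100000), 316045]]"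

definition VdY :: "int list list" where "VdY = [[0, 1686509, (-533647), (-533647), (-533647), (-390928), (-533647), (-533647), (-533647), 5529, 1297839], [0, 0, 1599855, (-740554), (-740554), 1542596, (-740554), (-172169), 1190127, (-560707), (-129645)], [0, 0, 0, 1418138, (-1222166), 23804, 193045, (-925354), 473292, 162662, (-213957)], [0, 0, 0, 0, 719323, 87375, 708593, (-1251545), 382327, (-1547962), 569572], [0, 0, 0, 0, 0, 551077, (-59430), (-159839), 485058, 178716, (-430651)], [0, 0, 0, 0, 0, 0, 1211698, (-211527), (-525609), (-194923), (-570527)], [0, 0, 0, 0, 0, 0, 0, 192238, (-504907), (-179111), 497344], [0, 0, 0, 0, 0, 0, 0, 0, 80469, 68709, (-117915)], [0, 0, 0, 0, 0, 0, 0, 0, 0, 22561, (-20017)], [0, 0, 0, 0, 0, 0, 0, 0, 0, 0, 17598]]"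

definition adY :: int where "adY = 9000000"

definition udY :: int where "udY = 316045"

lemma chkX: "es_ok edgesX" "alpha_chk edgesX [1,2,6,7,9] [3,4,5,8,10]" "wit_chk edgesX [1,2,3,4]" "col_chk edgesX [0,0,0,0,0,1,1,2,2,1,1]"
  by code_simp+
lemma chkY: "es_ok edgesY" "alpha_chk edgesY [1,2,5,8,10] [3,4,6,7,9]" "wit_chk edgesY [1,2,3,4]" "col_chk edgesY [0,0,0,0,0,1,1,2,2,1,1]"
  by code_simp+
lemma chkSW: "sw_chk edgesX edgesY" "deg_chk edgesX edgesY" by code_simp+

lemma primX: "dd_ok 12 apX MpX VpX" "0 < apX" "shape MpX 12"
  "list_all (\<lambda>i. list_all (\<lambda>j. core_adj edgesX i j \<longrightarrow> tab MpX i j = 0) [0..<12]) [0..<12]"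
  "list_all (\<lambda>j. tab MpX 0 j = 0) [0..<12]"
  "sum_list (map (\<lambda>i. tab MpX i i) [0..<12]) = 100000"
  "sum_list (map (\<lambda>i. sum_list (map (\<lambda>j. tab MpX i j) [0..<12])) [0..<12]) = 516470"
  by code_simp+
lemma primY: "dd_ok 12 apY MpY VpY" "0 < apY" "shape MpY 12"
  "list_all (\<lambda>i. list_all (\<lambda>j. core_adj edgesY i j \<longrightarrow> tab MpY i j = 0) [0..<12]) [0..<12]"
  "list_all (\<lambda>j. tab MpY 0 j = 0) [0..<12]"
  "sum_list (map (\<lambda>i. tab MpY i i) [0..<12]) = 100000"
  by code_simp+
lemma dualX: "dd_ok 11 adX MdX VdX" "0 < adX" "shape MdX 11" "0 \<le> udX"
  "list_all (\<lambda>i. list_all (\<lambda>j. core_adj edgesX i j \<or> tab MdX i j = (if i = 0 \<or> j = 0 then 0 else if i = j then udX else -100000)) [0..<11]) [0..<11]"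
  by code_simp+
lemma dualY: "dd_ok 11 adY MdY VdY" "0 < adY" "shape MdY 11" "0 \<le> udY" "udY = 316045"
  "list_all (\<lambda>i. list_all (\<lambda>j. core_adj edgesY i j \<or> tab MdY i j = (if i = 0 \<or> j = 0 then 0 else if i = j then udY else -100000)) [0..<11]) [0..<11]"
  by code_simp+



lemma la1: "list_all P [0..<N] \<Longrightarrow> \<forall>i<N. P i"
  by (simp add: list_all_iff)

lemma la2: "list_all (\<lambda>i. list_all (P i) [0..<N]) [0..<N] \<Longrightarrow> \<forall>i<N. \<forall>j<N. P i j"
  by (simp add: list_all_iff)

theorem mainTheorem4:
  fixes n :: nat
  assumes "even n" and "n \<ge> 14"
  shows "\<exists>G H. simple_graph n G \<and> simple_graph n H \<and>
           connected_graph n G \<and> connected_graph n H \<and>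
           irregular n G \<and> irregular n H \<and>
           \<not> isomorphic n G H \<and>
           cospectral (graph_adj_mat n G) (graph_adj_mat n H) \<and>
           cospectral (laplacian n G) (laplacian n H) \<and>
           cospectral (signless_laplacian n G) (signless_laplacian n H) \<and>
           cospectral (normalized_laplacian n G) (normalized_laplacian n H) \<and>
           independence_number n G = independence_number n H \<and>
           clique_number n G = clique_number n H \<and>
           chromatic_number n G = chromatic_number n H \<and>
           lovasz_theta n G \<noteq> lovasz_theta n H"
proof -
  have n14: "14 \<le> n" using assms(2) .
  have n12: "12 \<le> n" and n11: "11 \<le> n" and n0: "0 < n" using n14 by auto
  define G where "G = gr edgesX n"
  define H where "H = gr edgesY n"
  define BX where "BX = mat n n (\<lambda>(i,j). real_of_int (tab MpX i j) / real_of_int 100000)"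
  define BY where "BY = mat n n (\<lambda>(i,j). real_of_int (tab MpY i j) / real_of_int 100000)"
  have lbX: "feas n G BX" "tval n BX = real_of_int 516470 / real_of_int 100000"
    using theta_lb[OF n12 primX(1,2,3) chkX(1) la2[OF primX(4)] la1[OF primX(5)] primX(6)[symmetric] _ BX_def]
      primX(7) unfolding G_def by simp_all
  have lbY: "feas n H BY"
    using theta_lb[OF n12 primY(1,2,3) chkY(1) la2[OF primY(4)] la1[OF primY(5)] primY(6)[symmetric] _ BY_def]
    unfolding H_def by simp
  have ubX: "tval n B \<le> real_of_int udX / real_of_int 100000 + 2" if "feas n G B" for B
    using theta_ub[OF n11 dualX(1,2) _ dualX(4,3) chkX(1) la2[OF dualX(5)]] that unfolding G_def by simp
  have ubY: "tval n B \<le> real_of_int 316045 / real_of_int 100000 + 2" if "feas n H B" for B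
    using theta_ub[OF n11 dualY(1,2) _ dualY(4,3) chkY(1) la2[OF dualY(6)]] that dualY(5) unfolding H_def by simp
  have thG: "516470 / 100000 \<le> lovasz_theta n G"
    using theta_ge[OF lbX(1) ubX] lbX(2) by simp
  have thH: "lovasz_theta n H \<le> 316045 / 100000 + 2"
    using theta_le[OF lbY ubY] by simp
  have thne: "lovasz_theta n G \<noteq> lovasz_theta n H" using thG thH by linarith
  have noniso: "\<not> isomorphic n G H"
  proof
    assume "isomorphic n G H"
    then obtain B' where "feas n H B'" "tval n B' = tval n BX" using iso_transport lbX(1) by blast
    then show False using ubY lbX(2) by fastforce
  qed
  have cs: "cospectral (graph_adj_mat n G) (graph_adj_mat n H)"
    "cospectral (laplacian n G) (laplacian n H)"
    "cospectral (signless_laplacian n G) (signless_laplacian n H)"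
    "cospectral (normalized_laplacian n G) (normalized_laplacian n H)"
    unfolding G_def H_def by (rule cospectral_all[OF chkX(1) chkY(1) chkSW n11])+
  have al: "independence_number n G = independence_number n H"
    unfolding G_def H_def alpha_gr[OF chkX(1,2,3) n12] alpha_gr[OF chkY(1,2,3) n12] ..
  have om: "clique_number n G = clique_number n H"
    unfolding G_def H_def omega_gr[OF chkX(1,4) n14] omega_gr[OF chkY(1,4) n14] ..
  have ch: "chromatic_number n G = chromatic_number n H"
    unfolding G_def H_def chi_gr[OF chkX(1,4) n14] chi_gr[OF chkY(1,4) n14] ..
  have basic: "simple_graph n G" "simple_graph n H" "connected_graph n G" "connected_graph n H"
    "irregular n G" "irregular n H"
    unfolding G_def H_def using gr_simple gr_connected[OF n0] gr_irregular[OF chkX(1) n14]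
      gr_irregular[OF chkY(1) n14] by auto
  show ?thesis using basic noniso cs al om ch thne by blast
qed


end
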